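(* Let $x$ be a half-integer square point with support graph $G_x$, let $H$ be a Hamiltonian cycle of $G_x$ containing all 1-edges of $x$ and two opposite half-edges from each half-square, and let $G=(V,E)$ be the 4-regular graph obtained from $G_x$ by replacing each path of 1-edges by a single 1-edge and contracting each half-square into a vertex. Let $\alpha>0$. If $P(G,\alpha)$ holds, then the vector $r^{\alpha,x}$ can be written as a convex combination of 2-edge-connected multigraphs of $G_x$.
   Context: $\mathrm{LP}(G)$ is the set of $x\in\mathbb{R}^E$ with $0\le x\le2$ and $x(\delta(S))\ge2$ for all $\emptyset\subsetneq S\subsetneq V$. The support graph $G_x$ has edge set $\{e:x_e>0\}$; 1-edges have $x_e=1$, half-edges $x_e=\frac12$. A half-integer Boyd-Carr point is a point $x\in\mathrm{LP}(G)$ with entries in $\{0,\frac12,1\}$ such that $G_x$ is cubic and 3-edge-connected, exactly one 1-edge is incident to each vertex, and the half-edges form vertex-disjoint 4-cycles (half-squares); a half-integer square point is obtained from such a point by replacing each 1-edge by a path of 1-edges of arbitrary length. Let $A$ be the set of 1-edges of $G_x$, $B$ the half-edges in $H$, and $C$ the half-edges not in $H$. For $\alpha>0$, $r^{\alpha,x}\in\mathbb{R}^{E(G_x)}$ has $r^{\alpha,x}_e=1+\alpha$ for $e\in A$, $r^{\alpha,x}_e=\frac12$ for $e\in B$, and $r^{\alpha,x}_e=1-\alpha$ for $e\in C$. $P(G,\alpha)$ holds if the everywhere $\alpha$ vector for $G$ (all entries $\alpha$) can be written as $\sum_{i=1}^k\lambda_i\chi^{M_i}$ with $\lambda_i\ge0$,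 $\sum_i\lambda_i=1$, where each $M_i$ is a matching of $G$ such that $(V,E\setminus M_i)$ is 2-vertex-connected. A 2-edge-connected multigraph of $G_x$ is a multiset of edges of $G_x$ forming a spanning 2-edge-connected multigraph; its incidence vector counts copies of each edge, and "written as a convex combination" means equal to a convex combination of such incidence vectors. *)

theory Defs
  imports Complex_Main
begin

text \<open>Finite multigraphs are given by a vertex set V, an edge set E (edges are
abstract elements, so parallel edges are allowed) and an endpoint map ends.\<close>

definition wf_graph :: "'v set \<Rightarrow> 'e set \<Rightarrow> ('e \<Rightarrow> 'v set) \<Rightarrow> bool" where
  "wf_graph V E ends \<longleftrightarrow> finite V \<and> finite E \<and>
     (\<forall>e\<in>E. ends e \<subseteq> V \<and> card (ends e) = 2)"

definition cut :: "'e set \<Rightarrow> ('e \<Rightarrow> 'v set) \<Rightarrow> 'v set \<Rightarrow> 'e set" where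
  "cut E ends S = {e\<in>E. card (ends e \<inter> S) = 1}"

definition in_LP :: "'v set \<Rightarrow> 'e set \<Rightarrow> ('e \<Rightarrow> 'v set) \<Rightarrow> ('e \<Rightarrow> real) \<Rightarrow> bool" where
  "in_LP V E ends x \<longleftrightarrow> (\<forall>e\<in>E. 0 \<le> x e \<and> x e \<le> 2) \<and>
     (\<forall>S. S \<noteq> {} \<and> S \<subset> V \<longrightarrow> sum x (cut E ends S) \<ge> 2)"

definition degree :: "'e set \<Rightarrow> ('e \<Rightarrow> 'v set) \<Rightarrow> 'v \<Rightarrow> nat" where
  "degree E ends v = card {e\<in>E. v \<in> ends e}"

definition k_edge_connected :: "nat \<Rightarrow> 'v set \<Rightarrow> 'e set \<Rightarrow> ('e \<Rightarrow> 'v set) \<Rightarrow> bool" where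
  "k_edge_connected k V E ends \<longleftrightarrow>
     (\<forall>S. S \<noteq> {} \<and> S \<subset> V \<longrightarrow> card (cut E ends S) \<ge> k)"

definition four_cycle :: "('e \<Rightarrow> 'v set) \<Rightarrow> 'e set \<Rightarrow> bool" where
  "four_cycle ends C \<longleftrightarrow> (\<exists>a b c d e1 e2 e3 e4.
     distinct [a,b,c,d] \<and> distinct [e1,e2,e3,e4] \<and> C = {e1,e2,e3,e4} \<and>
     ends e1 = {a,b} \<and> ends e2 = {b,c} \<and> ends e3 = {c,d} \<and> ends e4 = {d,a})"

definition verts :: "('e \<Rightarrow> 'v set) \<Rightarrow> 'e set \<Rightarrow> 'v set" where
  "verts ends C = \<Union>(ends ` C)"

definition half_squares :: "'e set \<Rightarrow> ('e \<Rightarrow> 'v set) \<Rightarrow> ('e \<Rightarrow> real) \<Rightarrow> 'e set set" where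
  "half_squares E ends x = {C. C \<subseteq> {e\<in>E. x e = 1/2} \<and> four_cycle ends C}"

text \<open>Half-integer Boyd-Carr point; E is the edge set of the support graph G_x.\<close>
definition boyd_carr_point :: "'v set \<Rightarrow> 'e set \<Rightarrow> ('e \<Rightarrow> 'v set) \<Rightarrow> ('e \<Rightarrow> real) \<Rightarrow> bool" where
  "boyd_carr_point V E ends x \<longleftrightarrow> wf_graph V E ends \<and>
     (\<forall>e\<in>E. x e = 1/2 \<or> x e = 1) \<and>
     in_LP V E ends x \<and>
     (\<forall>v\<in>V. degree E ends v = 3) \<and>
     k_edge_connected 3 V E ends \<and>
     (\<forall>v\<in>V. card {e\<in>E. v \<in> ends e \<and> x e = 1} = 1) \<and>
     \<Union>(half_squares E ends x) = {e\<in>E. x e = 1/2} \<and>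
     (\<forall>C\<in>half_squares E ends x. \<forall>D\<in>half_squares E ends x.
        C \<noteq> D \<longrightarrow> verts ends C \<inter> verts ends D = {})"

definition is_path :: "('e \<Rightarrow> 'v set) \<Rightarrow> 'v list \<Rightarrow> 'e list \<Rightarrow> bool" where
  "is_path ends vs es \<longleftrightarrow> length vs = Suc (length es) \<and> es \<noteq> [] \<and>
     distinct vs \<and> distinct es \<and>
     (\<forall>i<length es. ends (es ! i) = {vs ! i, vs ! Suc i})"

definition inner :: "'v list \<Rightarrow> 'v set" where
  "inner vs = set (butlast (tl vs))"

text \<open>(V,E,ends,x) is obtained from the Boyd-Carr point (V0,E0,ends0,x0) by
replacing each 1-edge f by a path pe f (through vertices pv f) of 1-edges;
the half-edges are kept unchanged.\<close>
definition subdivision ::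
  "'v set \<Rightarrow> 'e set \<Rightarrow> ('e \<Rightarrow> 'v set) \<Rightarrow> ('e \<Rightarrow> real) \<Rightarrow>
   'v set \<Rightarrow> 'e set \<Rightarrow> ('e \<Rightarrow> 'v set) \<Rightarrow> ('e \<Rightarrow> real) \<Rightarrow> bool" where
  "subdivision V0 E0 ends0 x0 V E ends x \<longleftrightarrow>
     wf_graph V E ends \<and> (\<forall>e\<in>E. x e = 1/2 \<or> x e = 1) \<and> V0 \<subseteq> V \<and>
     {e\<in>E. x e = 1/2} = {e\<in>E0. x0 e = 1/2} \<and>
     (\<forall>e\<in>E0. x0 e = 1/2 \<longrightarrow> ends e = ends0 e) \<and>
     (\<exists>pv pe.
        (\<forall>f\<in>E0. x0 f = 1 \<longrightarrow>
            is_path ends (pv f) (pe f) \<and> {hd (pv f), last (pv f)} = ends0 f \<and>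
            set (pe f) \<subseteq> E \<and> (\<forall>e\<in>set (pe f). x e = 1) \<and>
            inner (pv f) \<inter> V0 = {}) \<and>
        (\<forall>f\<in>E0. \<forall>g\<in>E0. x0 f = 1 \<and> x0 g = 1 \<and> f \<noteq> g \<longrightarrow>
            set (pe f) \<inter> set (pe g) = {} \<and> inner (pv f) \<inter> inner (pv g) = {}) \<and>
        {e\<in>E. x e = 1} = (\<Union>f\<in>{f\<in>E0. x0 f = 1}. set (pe f)) \<and>
        V = V0 \<union> (\<Union>f\<in>{f\<in>E0. x0 f = 1}. inner (pv f)))"

definition half_integer_square_point ::
  "'v set \<Rightarrow> 'e set \<Rightarrow> ('e \<Rightarrow> 'v set) \<Rightarrow> ('e \<Rightarrow> real) \<Rightarrow> bool" where
  "half_integer_square_point V E ends x \<longleftrightarrow>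
     (\<exists>V0 E0 ends0 x0. boyd_carr_point V0 E0 ends0 x0 \<and>
        subdivision V0 E0 ends0 x0 V E ends x)"

definition hamiltonian_cycle :: "'v set \<Rightarrow> 'e set \<Rightarrow> ('e \<Rightarrow> 'v set) \<Rightarrow> 'e set \<Rightarrow> bool" where
  "hamiltonian_cycle V E ends H \<longleftrightarrow> H \<subseteq> E \<and>
     (\<exists>vs es. length vs \<ge> 3 \<and> distinct vs \<and> set vs = V \<and>
        length es = length vs \<and> distinct es \<and> set es = H \<and>
        (\<forall>i<length vs. ends (es ! i) = {vs ! i, vs ! ((i + 1) mod length vs)}))"

text \<open>Contracted graph G: vertices are the vertex sets of the half-squares,
edges are the 1-edges of the Boyd-Carr point, an edge joining the
half-squares containing its endpoints.\<close>
definition contr_V :: "'e set \<Rightarrow> ('e \<Rightarrow> 'v set) \<Rightarrow> ('e \<Rightarrow> real) \<Rightarrow> 'v set set" where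
  "contr_V E ends x = verts ends ` half_squares E ends x"

definition contr_E :: "'e set \<Rightarrow> ('e \<Rightarrow> real) \<Rightarrow> 'e set" where
  "contr_E E x = {f\<in>E. x f = 1}"

definition contr_ends :: "'e set \<Rightarrow> ('e \<Rightarrow> 'v set) \<Rightarrow> ('e \<Rightarrow> real) \<Rightarrow> 'e \<Rightarrow> 'v set set" where
  "contr_ends E ends x f = {Q\<in>contr_V E ends x. Q \<inter> ends f \<noteq> {}}"

definition matching :: "'e set \<Rightarrow> ('e \<Rightarrow> 'w set) \<Rightarrow> 'e set \<Rightarrow> bool" where
  "matching E ends M \<longleftrightarrow> M \<subseteq> E \<and> (\<forall>e\<in>M. card (ends e) = 2) \<and>
     (\<forall>e\<in>M. \<forall>f\<in>M. e \<noteq> f \<longrightarrow> ends e \<inter> ends f = {})"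

definition adj :: "'e set \<Rightarrow> ('e \<Rightarrow> 'w set) \<Rightarrow> ('w \<times> 'w) set" where
  "adj F ends = {(u,v). \<exists>e\<in>F. ends e = {u,v}}"

definition connected_graph :: "'w set \<Rightarrow> 'e set \<Rightarrow> ('e \<Rightarrow> 'w set) \<Rightarrow> bool" where
  "connected_graph V F ends \<longleftrightarrow> (\<forall>u\<in>V. \<forall>v\<in>V. (u,v) \<in> (adj F ends)\<^sup>*)"

text \<open>2-vertex-connected (Diestel): more than 2 vertices, and connected after
deleting any at most one vertex.\<close>
definition two_vertex_connected :: "'w set \<Rightarrow> 'e set \<Rightarrow> ('e \<Rightarrow> 'w set) \<Rightarrow> bool" where
  "two_vertex_connected V F ends \<longleftrightarrow> card V > 2 \<and> connected_graph V F ends \<and>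
     (\<forall>v\<in>V. connected_graph (V - {v}) {e\<in>F. v \<notin> ends e} ends)"

definition P_prop :: "'w set \<Rightarrow> 'e set \<Rightarrow> ('e \<Rightarrow> 'w set) \<Rightarrow> real \<Rightarrow> bool" where
  "P_prop V E ends \<alpha> \<longleftrightarrow> (\<exists>k (lam :: nat \<Rightarrow> real) (M :: nat \<Rightarrow> 'e set).
     (\<forall>i<k. lam i \<ge> 0 \<and> matching E ends (M i) \<and> two_vertex_connected V (E - M i) ends) \<and>
     (\<Sum>i<k. lam i) = 1 \<and>
     (\<forall>e\<in>E. (\<Sum>i<k. lam i * (if e \<in> M i then 1 else 0)) = \<alpha>))"

definition two_ec_multigraph :: "'v set \<Rightarrow> 'e set \<Rightarrow> ('e \<Rightarrow> 'v set) \<Rightarrow> ('e \<Rightarrow> nat) \<Rightarrow> bool" where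
  "two_ec_multigraph V E ends m \<longleftrightarrow> (\<forall>e. e \<notin> E \<longrightarrow> m e = 0) \<and>
     (\<forall>S. S \<noteq> {} \<and> S \<subset> V \<longrightarrow> (\<Sum>e\<in>cut E ends S. m e) \<ge> 2)"

definition r_vec :: "real \<Rightarrow> ('e \<Rightarrow> real) \<Rightarrow> 'e set \<Rightarrow> 'e \<Rightarrow> real" where
  "r_vec \<alpha> x H e = (if x e = 1 then 1 + \<alpha> else if e \<in> H then 1/2 else 1 - \<alpha>)"

definition convex_comb_2ec :: "'v set \<Rightarrow> 'e set \<Rightarrow> ('e \<Rightarrow> 'v set) \<Rightarrow> ('e \<Rightarrow> real) \<Rightarrow> bool" where
  "convex_comb_2ec V E ends y \<longleftrightarrow> (\<exists>k (lam :: nat \<Rightarrow> real) (m :: nat \<Rightarrow> 'e \<Rightarrow> nat).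
     (\<forall>i<k. lam i \<ge> 0 \<and> two_ec_multigraph V E ends (m i)) \<and>
     (\<Sum>i<k. lam i) = 1 \<and>
     (\<forall>e\<in>E. (\<Sum>i<k. lam i * real (m i e)) = y e))"

end

theory Submission
  imports Defs
begin
lemma adj_sym: "(u,v) \<in> adj F ends \<Longrightarrow> (v,u) \<in> adj F ends"
  unfolding adj_def by (auto simp: insert_commute)

lemma adj_rtrancl_sym: "(u,v) \<in> (adj F ends)\<^sup>* \<Longrightarrow> (v,u) \<in> (adj F ends)\<^sup>*"
proof (induction rule: rtrancl_induct)
  case base then show ?case by simp
next
  case (step y z)
  then show ?case using adj_sym by (meson converse_rtrancl_into_rtrancl)
qed

lemma adj_mono: "F \<subseteq> F' \<Longrightarrow> adj F ends \<subseteq> adj F' ends"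
  unfolding adj_def by auto

lemma adj_rtrancl_mono: "(u,v) \<in> (adj F ends)\<^sup>* \<Longrightarrow> F \<subseteq> F' \<Longrightarrow> (u,v) \<in> (adj F' ends)\<^sup>*"
  using rtrancl_mono[OF adj_mono] by blast

lemma adj_edge: "e \<in> F \<Longrightarrow> ends e = {u,v} \<Longrightarrow> (u,v) \<in> (adj F ends)\<^sup>*"
  unfolding adj_def by auto

lemma adj_cross:
  assumes "(u,w) \<in> (adj F ends)\<^sup>*" "u \<in> S" "w \<notin> S"
  shows "\<exists>e\<in>F. \<exists>a b. ends e = {a,b} \<and> a \<in> S \<and> b \<notin> S"
  using assms
proof (induction rule: rtrancl_induct)
  case base then show ?case by simp
next
  case (step y z)
  show ?case
  proof (cases "y \<in> S")
    case True
    with step show ?thesis unfolding adj_def by auto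
  next
    case False
    then show ?thesis using step by blast
  qed
qed

lemma two_ec_crit:
  fixes m :: "'e \<Rightarrow> nat"
  assumes wf: "wf_graph V E ends"
    and zero: "\<forall>e. e \<notin> E \<longrightarrow> m e = 0"
    and conn: "\<forall>u\<in>V. \<forall>w\<in>V. (u,w) \<in> (adj {e\<in>E. m e \<ge> 1} ends)\<^sup>*"
    and cyc: "\<forall>e\<in>E. m e = 1 \<longrightarrow> (\<forall>a b. ends e = {a,b} \<longrightarrow>
                 (a,b) \<in> (adj ({e\<in>E. m e \<ge> 1} - {e}) ends)\<^sup>*)"
  shows "two_ec_multigraph V E ends m"
  unfolding two_ec_multigraph_def
proof (intro conjI allI impI)
  fix e assume "e \<notin> E" then show "m e = 0" using zero by auto
next
  fix S assume S: "S \<noteq> {} \<and> S \<subset> V"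
  let ?F = "{e\<in>E. m e \<ge> 1}"
  have finE: "finite E" using wf unfolding wf_graph_def by auto
  have fincut: "finite (cut E ends S)" using finE unfolding cut_def by auto
  obtain u where u: "u \<in> S" using S by auto
  obtain w where w: "w \<in> V" "w \<notin> S" using S by auto
  have uV: "u \<in> V" using S u by auto
  have incut: "e \<in> cut E ends S" if "e \<in> E" "ends e = {a,b}" "a \<in> S" "b \<notin> S" for e a b
  proof -
    have "ends e \<inter> S = {a}" using that by auto
    then show ?thesis using that unfolding cut_def by auto
  qed
  obtain e a b where e: "e \<in> ?F" "ends e = {a,b}" "a \<in> S" "b \<notin> S"
    using adj_cross[OF conn[rule_format, OF uV w(1)] u w(2)] by blast
  have ec: "e \<in> cut E ends S" using incut e by auto
  show "(\<Sum>e\<in>cut E ends S. m e) \<ge> 2"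
  proof (cases "m e \<ge> 2")
    case True
    have "m e \<le> (\<Sum>e\<in>cut E ends S. m e)"
      using member_le_sum[OF ec _ fincut, of m] by auto
    then show ?thesis using True by auto
  next
    case False
    then have m1: "m e = 1" using e by auto
    have "(a,b) \<in> (adj (?F - {e}) ends)\<^sup>*" using cyc e m1 by auto
    then obtain e' a' b' where e': "e' \<in> ?F - {e}" "ends e' = {a',b'}" "a' \<in> S" "b' \<notin> S"
      using adj_cross[OF _ e(3) e(4)] by blast
    have ec': "e' \<in> cut E ends S" using incut e' by auto
    have "(\<Sum>e\<in>{e,e'}. m e) \<le> (\<Sum>e\<in>cut E ends S. m e)"
      by (rule sum_mono2[OF fincut]) (use ec ec' in auto)
    moreover have "(\<Sum>e\<in>{e,e'}. m e) = m e + m e'" using e' by auto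
    ultimately show ?thesis using m1 e' by auto
  qed
qed

lemma path_seg:
  assumes "is_path ends vs es" "i \<le> j" "j < length vs"
  shows "(vs!i, vs!j) \<in> (adj ((!) es ` {i..<j}) ends)\<^sup>*"
  using assms(2,3)
proof (induction j)
  case 0 then show ?case by simp
next
  case (Suc j)
  show ?case
  proof (cases "i = Suc j")
    case True then show ?thesis by simp
  next
    case False
    then have ij: "i \<le> j" using Suc.prems by auto
    have jl: "j < length vs" using Suc.prems by auto
    have IH0: "(vs!i, vs!j) \<in> (adj ((!) es ` {i..<j}) ends)\<^sup>*"
      using Suc.IH[OF ij jl] .
    have sub: "(!) es ` {i..<j} \<subseteq> (!) es ` {i..<Suc j}" by auto
    have IH: "(vs!i, vs!j) \<in> (adj ((!) es ` {i..<Suc j}) ends)\<^sup>*"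
      using adj_rtrancl_mono[OF IH0 sub] .
    have "j < length es" using Suc.prems assms(1) unfolding is_path_def by auto
    then have "ends (es!j) = {vs!j, vs!Suc j}" using assms(1) unfolding is_path_def by auto
    moreover have "es!j \<in> (!) es ` {i..<Suc j}" using ij by auto
    ultimately have "(vs!j, vs!Suc j) \<in> (adj ((!) es ` {i..<Suc j}) ends)\<^sup>*"
      by (intro adj_edge)
    then show ?thesis using IH by (meson rtrancl_trans)
  qed
qed
lemma path_all:
  assumes "is_path ends vs es" "set es \<subseteq> F" "u \<in> set vs" "w \<in> set vs"
  shows "(u,w) \<in> (adj F ends)\<^sup>*"
proof -
  have h: "(vs!0, v) \<in> (adj F ends)\<^sup>*" if vin: "v \<in> set vs" for v
  proof -
    obtain i where i: "i < length vs" "v = vs!i" using vin unfolding in_set_conv_nth by blast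
    have "(vs!0, vs!i) \<in> (adj ((!) es ` {0..<i}) ends)\<^sup>*" using path_seg[OF assms(1)] i by auto
    moreover have "(!) es ` {0..<i} \<subseteq> F"
    proof (rule image_subsetI)
      fix l assume "l \<in> {0..<i}"
      then have "l < length es" using i assms(1) unfolding is_path_def by auto
      then show "es!l \<in> F" using assms(2) nth_mem by blast
    qed
    ultimately have "(vs!0, vs!i) \<in> (adj F ends)\<^sup>*" by (rule adj_rtrancl_mono)
    then show ?thesis using i(2) by simp
  qed
  have "(u, vs!0) \<in> (adj F ends)\<^sup>*" using adj_rtrancl_sym[OF h[OF assms(3)]] .
  then show ?thesis using h[OF assms(4)] by (rule rtrancl_trans)
qed

lemma path_minus:
  assumes p: "is_path ends vs es" and j: "j < length es"
  shows "(vs!j, hd vs) \<in> (adj (set es - {es!j}) ends)\<^sup>*"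
    and "(vs!Suc j, last vs) \<in> (adj (set es - {es!j}) ends)\<^sup>*"
proof -
  have len: "length vs = Suc (length es)" "distinct es" "vs \<noteq> []" using p unfolding is_path_def by auto
  have "(vs!0, vs!j) \<in> (adj ((!) es ` {0..<j}) ends)\<^sup>*" using path_seg[OF p] j len by auto
  moreover have "(!) es ` {0..<j} \<subseteq> set es - {es!j}"
  proof (rule image_subsetI)
    fix i assume "i \<in> {0..<j}"
    then have "i < length es" "i \<noteq> j" using j by auto
    then show "es!i \<in> set es - {es!j}" using nth_eq_iff_index_eq[OF len(2)] j by (simp add: nth_mem)
  qed
  ultimately have "(vs!0, vs!j) \<in> (adj (set es - {es!j}) ends)\<^sup>*" by (rule adj_rtrancl_mono)
  then have "(vs!j, vs!0) \<in> (adj (set es - {es!j}) ends)\<^sup>*" by (rule adj_rtrancl_sym)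
  moreover have "hd vs = vs!0" using len(3) by (simp add: hd_conv_nth)
  ultimately show "(vs!j, hd vs) \<in> (adj (set es - {es!j}) ends)\<^sup>*" by simp
  have "(vs!Suc j, vs!length es) \<in> (adj ((!) es ` {Suc j..<length es}) ends)\<^sup>*"
    using path_seg[OF p] j len by auto
  moreover have "(!) es ` {Suc j..<length es} \<subseteq> set es - {es!j}"
  proof (rule image_subsetI)
    fix i assume "i \<in> {Suc j..<length es}"
    then have "i < length es" "i \<noteq> j" using j by auto
    then show "es!i \<in> set es - {es!j}" using nth_eq_iff_index_eq[OF len(2)] j by (simp add: nth_mem)
  qed
  ultimately have "(vs!Suc j, vs!length es) \<in> (adj (set es - {es!j}) ends)\<^sup>*" by (rule adj_rtrancl_mono)
  moreover have "last vs = vs ! length es" by (metis diff_Suc_1 last_conv_nth len(1) len(3))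
  ultimately show "(vs!Suc j, last vs) \<in> (adj (set es - {es!j}) ends)\<^sup>*" by simp
qed


lemma is_path2:
  assumes "distinct [v0,v1,v2]" "f0 \<noteq> f1" "en f0 = {v0,v1}" "en f1 = {v1,v2}"
  shows "is_path en [v0,v1,v2] [f0,f1]"
  unfolding is_path_def using assms by (auto simp: less_Suc_eq numeral_2_eq_2)

lemma is_path3:
  assumes "distinct [v0,v1,v2,v3]" "distinct [f0,f1,f2]" "en f0 = {v0,v1}" "en f1 = {v1,v2}" "en f2 = {v2,v3}"
  shows "is_path en [v0,v1,v2,v3] [f0,f1,f2]"
  unfolding is_path_def using assms by (auto simp: less_Suc_eq numeral_3_eq_3)

lemma sq_abstract:
  fixes en :: "'e \<Rightarrow> 'v set"
  assumes dv: "distinct [a,b,c,d]" and de: "distinct [e1,e2,e3,e4]"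
    and en: "en e1 = {a,b}" "en e2 = {b,c}" "en e3 = {c,d}" "en e4 = {d,a}"
    and uniq: "\<forall>p\<in>{a,b,c,d}. \<forall>q\<in>{a,b,c,d}. mt p \<and> mt q \<longrightarrow> p = q"
    and pdmt: "\<forall>p. pd p \<longrightarrow> mt p"
    and beta: "\<beta> = e1 \<or> \<beta> = e3"
    and K: "K = {e\<in>{e1,e2,e3,e4}. (\<forall>p\<in>{a,b,c,d}. pd p \<longrightarrow> p \<notin> en e) \<and>
               (\<forall>p\<in>{a,b,c,d}. mt p \<and> \<not> pd p \<longrightarrow> e\<in>{e1,e3} \<longrightarrow> p \<in> en e) \<and>
               ((\<forall>p\<in>{a,b,c,d}. \<not> mt p) \<longrightarrow> e \<noteq> \<beta>)}"
  shows "\<exists>vs es. is_path en vs es \<and> set es = K \<and> set vs = {a,b,c,d} - {p. pd p} \<and>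
            \<not> mt (hd vs) \<and> \<not> mt (last vs)"
proof -
  have P1: "is_path en [b,c,d,a] [e2,e3,e4]" using dv de en by (intro is_path3) auto
  have P2: "is_path en [c,b,a,d] [e2,e1,e4]" using dv de en by (intro is_path3) (auto simp: insert_commute)
  consider "\<forall>p\<in>{a,b,c,d}. \<not> mt p" | "mt a" | "mt b" | "mt c" | "mt d" by auto
  then show ?thesis
  proof cases
    case 1
    then have np: "\<forall>p\<in>{a,b,c,d}. \<not> pd p" using pdmt by auto
    show ?thesis
    proof (cases "\<beta> = e1")
      case True
      have "set [e2,e3,e4] = K" unfolding K using 1 np True de by auto
      moreover have "set [b,c,d,a] = {a,b,c,d} - {p. pd p}" using np by auto
      ultimately show ?thesis using P1 1 by (intro exI[of _ "[b,c,d,a]"] exI[of _ "[e2,e3,e4]"]) auto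
    next
      case False
      then have b3: "\<beta> = e3" using beta by auto
      have "set [e2,e1,e4] = K" unfolding K using 1 np b3 de by auto
      moreover have "set [c,b,a,d] = {a,b,c,d} - {p. pd p}" using np by auto
      ultimately show ?thesis using P2 1 by (intro exI[of _ "[c,b,a,d]"] exI[of _ "[e2,e1,e4]"]) auto
    qed
  next
    case 2
    then have o: "\<not> mt b" "\<not> mt c" "\<not> mt d" using uniq dv by auto
    then have op: "\<not> pd b" "\<not> pd c" "\<not> pd d" using pdmt by auto
    show ?thesis
    proof (cases "pd a")
      case True
      have "set [e2,e3] = K" unfolding K using 2 o op True de dv en by auto
      moreover have "set [b,c,d] = {a,b,c,d} - {p. pd p}" using op True dv by auto
      moreover have "is_path en [b,c,d] [e2,e3]" using dv de en by (intro is_path2) auto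
      ultimately show ?thesis using o by (intro exI[of _ "[b,c,d]"] exI[of _ "[e2,e3]"]) auto
    next
      case False
      have "set [e2,e1,e4] = K" unfolding K using 2 o op False de dv en by auto
      moreover have "set [c,b,a,d] = {a,b,c,d} - {p. pd p}" using op False dv by auto
      ultimately show ?thesis using o P2 by (intro exI[of _ "[c,b,a,d]"] exI[of _ "[e2,e1,e4]"]) auto
    qed
  next
    case 3
    then have o: "\<not> mt a" "\<not> mt c" "\<not> mt d" using uniq dv by auto
    then have op: "\<not> pd a" "\<not> pd c" "\<not> pd d" using pdmt by auto
    show ?thesis
    proof (cases "pd b")
      case True
      have "set [e3,e4] = K" unfolding K using 3 o op True de dv en by auto
      moreover have "set [c,d,a] = {a,b,c,d} - {p. pd p}" using op True dv by auto
      moreover have "is_path en [c,d,a] [e3,e4]" using dv de en by (intro is_path2) auto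
      ultimately show ?thesis using o by (intro exI[of _ "[c,d,a]"] exI[of _ "[e3,e4]"]) auto
    next
      case False
      have "set [e2,e1,e4] = K" unfolding K using 3 o op False de dv en by auto
      moreover have "set [c,b,a,d] = {a,b,c,d} - {p. pd p}" using op False dv by auto
      ultimately show ?thesis using o P2 by (intro exI[of _ "[c,b,a,d]"] exI[of _ "[e2,e1,e4]"]) auto
    qed
  next
    case 4
    then have o: "\<not> mt a" "\<not> mt b" "\<not> mt d" using uniq dv by auto
    then have op: "\<not> pd a" "\<not> pd b" "\<not> pd d" using pdmt by auto
    show ?thesis
    proof (cases "pd c")
      case True
      have "set [e1,e4] = K" unfolding K using 4 o op True de dv en by auto
      moreover have "set [b,a,d] = {a,b,c,d} - {p. pd p}" using op True dv by auto
      moreover have "is_path en [b,a,d] [e1,e4]" using dv de en by (intro is_path2) (auto simp: insert_commute)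
      ultimately show ?thesis using o by (intro exI[of _ "[b,a,d]"] exI[of _ "[e1,e4]"]) auto
    next
      case False
      have "set [e2,e3,e4] = K" unfolding K using 4 o op False de dv en by auto
      moreover have "set [b,c,d,a] = {a,b,c,d} - {p. pd p}" using op False dv by auto
      ultimately show ?thesis using o P1 by (intro exI[of _ "[b,c,d,a]"] exI[of _ "[e2,e3,e4]"]) auto
    qed
  next
    case 5
    then have o: "\<not> mt a" "\<not> mt b" "\<not> mt c" using uniq dv by auto
    then have op: "\<not> pd a" "\<not> pd b" "\<not> pd c" using pdmt by auto
    show ?thesis
    proof (cases "pd d")
      case True
      have "set [e1,e2] = K" unfolding K using 5 o op True de dv en by auto
      moreover have "set [a,b,c] = {a,b,c,d} - {p. pd p}" using op True dv by auto
      moreover have "is_path en [a,b,c] [e1,e2]" using dv de en by (intro is_path2) auto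
      ultimately show ?thesis using o by (intro exI[of _ "[a,b,c]"] exI[of _ "[e1,e2]"]) auto
    next
      case False
      have "set [e2,e3,e4] = K" unfolding K using 5 o op False de dv en by auto
      moreover have "set [b,c,d,a] = {a,b,c,d} - {p. pd p}" using op False dv by auto
      ultimately show ?thesis using o P1 by (intro exI[of _ "[b,c,d,a]"] exI[of _ "[e2,e3,e4]"]) auto
    qed
  qed
qed



locale L1 =
  fixes V0 :: "'v set" and E0 :: "'e set" and ends0 :: "'e \<Rightarrow> 'v set" and x0 :: "'e \<Rightarrow> real"
    and V :: "'v set" and E :: "'e set" and ends :: "'e \<Rightarrow> 'v set" and x :: "'e \<Rightarrow> real"
    and H :: "'e set" and pv :: "'e \<Rightarrow> 'v list" and pe :: "'e \<Rightarrow> 'e list"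
  assumes bc: "boyd_carr_point V0 E0 ends0 x0"
    and wfV: "wf_graph V E ends"
    and xE: "\<forall>e\<in>E. x e = 1/2 \<or> x e = 1"
    and V0V: "V0 \<subseteq> V"
    and halfeq: "{e\<in>E. x e = 1/2} = {e\<in>E0. x0 e = 1/2}"
    and halfends: "\<forall>e\<in>E0. x0 e = 1/2 \<longrightarrow> ends e = ends0 e"
    and paths: "\<forall>f\<in>E0. x0 f = 1 \<longrightarrow>
            is_path ends (pv f) (pe f) \<and> {hd (pv f), last (pv f)} = ends0 f \<and>
            set (pe f) \<subseteq> E \<and> (\<forall>e\<in>set (pe f). x e = 1) \<and>
            inner (pv f) \<inter> V0 = {}"
    and pdisj: "\<forall>f\<in>E0. \<forall>g\<in>E0. x0 f = 1 \<and> x0 g = 1 \<and> f \<noteq> g \<longrightarrow>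
            set (pe f) \<inter> set (pe g) = {} \<and> inner (pv f) \<inter> inner (pv g) = {}"
    and oneeq: "{e\<in>E. x e = 1} = (\<Union>f\<in>{f\<in>E0. x0 f = 1}. set (pe f))"
    and Veq: "V = V0 \<union> (\<Union>f\<in>{f\<in>E0. x0 f = 1}. inner (pv f))"
    and opp: "\<forall>C\<in>half_squares E ends x. \<exists>e1 e2. e1 \<noteq> e2 \<and> C \<inter> H = {e1, e2} \<and>
                 ends e1 \<inter> ends e2 = {}"
    and noloop: "\<forall>g\<in>contr_E E0 x0. card (contr_ends E0 ends0 x0 g) = 2"
begin

abbreviation "A0 \<equiv> contr_E E0 x0"
abbreviation "CV \<equiv> contr_V E0 ends0 x0"
abbreviation "cends \<equiv> contr_ends E0 ends0 x0"
abbreviation "Sq \<equiv> half_squares E0 ends0 x0"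

lemma A0_def': "A0 = {f\<in>E0. x0 f = 1}" unfolding contr_E_def by simp

lemma wf0: "wf_graph V0 E0 ends0" using bc unfolding boyd_carr_point_def by auto

lemma A0_ends:
  assumes "g \<in> A0"
  obtains u w where "ends0 g = {u,w}" "u \<noteq> w" "u \<in> V0" "w \<in> V0"
proof -
  have "card (ends0 g) = 2" "ends0 g \<subseteq> V0" using wf0 assms unfolding wf_graph_def contr_E_def by auto
  then obtain a b where "ends0 g = {a,b}" "a \<noteq> b" unfolding card_2_iff by blast
  then show ?thesis using that \<open>ends0 g \<subseteq> V0\<close> by auto
qed

definition one0 :: "'v \<Rightarrow> 'e" where
  "one0 v = (THE f. f \<in> E0 \<and> v \<in> ends0 f \<and> x0 f = 1)"

lemma one0:
  assumes "v \<in> V0"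
  shows "one0 v \<in> A0" "v \<in> ends0 (one0 v)"
    and "\<And>f. f \<in> A0 \<Longrightarrow> v \<in> ends0 f \<Longrightarrow> f = one0 v"
proof -
  have "card {e\<in>E0. v \<in> ends0 e \<and> x0 e = 1} = 1" using bc assms unfolding boyd_carr_point_def by auto
  then obtain f where f: "{e\<in>E0. v \<in> ends0 e \<and> x0 e = 1} = {f}" by (meson card_1_singletonE)
  then have th: "one0 v = f" unfolding one0_def by (intro the_equality) auto
  show "one0 v \<in> A0" "v \<in> ends0 (one0 v)" using f th unfolding contr_E_def by auto
  show "\<And>g. g \<in> A0 \<Longrightarrow> v \<in> ends0 g \<Longrightarrow> g = one0 v" using f th unfolding contr_E_def by auto
qed

lemma one0_end: "f \<in> A0 \<Longrightarrow> v \<in> ends0 f \<Longrightarrow> one0 v = f"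
proof -
  assume "f \<in> A0" "v \<in> ends0 f"
  moreover then have "v \<in> V0" using wf0 unfolding wf_graph_def contr_E_def by auto
  ultimately show ?thesis using one0(3) by metis
qed

lemma sq_disj: "Q \<in> Sq \<Longrightarrow> Q' \<in> Sq \<Longrightarrow> Q \<noteq> Q' \<Longrightarrow> verts ends0 Q \<inter> verts ends0 Q' = {}"
proof -
  assume "Q \<in> Sq" "Q' \<in> Sq" "Q \<noteq> Q'"
  moreover have "\<forall>C\<in>Sq. \<forall>D\<in>Sq. C \<noteq> D \<longrightarrow> verts ends0 C \<inter> verts ends0 D = {}"
    using bc unfolding boyd_carr_point_def by (elim conjE)
  ultimately show ?thesis by auto
qed

lemma CV_disj: "W \<in> CV \<Longrightarrow> W' \<in> CV \<Longrightarrow> W \<noteq> W' \<Longrightarrow> W \<inter> W' = {}"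
  unfolding contr_V_def using sq_disj by blast

lemma CV_eq: "W \<in> CV \<Longrightarrow> W' \<in> CV \<Longrightarrow> v \<in> W \<Longrightarrow> v \<in> W' \<Longrightarrow> W = W'"
  using CV_disj by blast

lemma cends_two:
  assumes g: "g \<in> A0" and uw: "ends0 g = {u,w}" "u \<noteq> w"
  shows "\<exists>Wu\<in>CV. \<exists>Ww\<in>CV. u \<in> Wu \<and> w \<in> Ww \<and> Wu \<noteq> Ww \<and> cends g = {Wu, Ww}"
proof -
  have "card (cends g) = 2" using noloop g by auto
  then obtain W1 W2 where W: "cends g = {W1,W2}" "W1 \<noteq> W2" by (meson card_2_iff)
  have W1: "W1 \<in> CV" "W1 \<inter> {u,w} \<noteq> {}" and W2: "W2 \<in> CV" "W2 \<inter> {u,w} \<noteq> {}"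
    using W uw unfolding contr_ends_def by auto
  have d: "W1 \<inter> W2 = {}" using CV_disj W1 W2 W by auto
  show ?thesis
  proof (cases "u \<in> W1")
    case True
    then have "w \<in> W2" using W2 d by auto
    then show ?thesis using True W W1 W2 by auto
  next
    case False
    then have "w \<in> W1" using W1 by auto
    then have "u \<in> W2" using W2 d by auto
    then show ?thesis using \<open>w \<in> W1\<close> W W1 W2 by auto
  qed
qed

definition sqW :: "'v \<Rightarrow> 'v set" where
  "sqW v = (THE W. W \<in> CV \<and> v \<in> W)"

lemma sqW_eq: "W \<in> CV \<Longrightarrow> v \<in> W \<Longrightarrow> sqW v = W"
  unfolding sqW_def by (rule the_equality) (auto dest: CV_eq[of W _ v])

lemma V0_in_sq: "v \<in> V0 \<Longrightarrow> \<exists>W\<in>CV. v \<in> W"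
proof -
  assume v: "v \<in> V0"
  obtain u w where uw: "ends0 (one0 v) = {u,w}" "u \<noteq> w" using A0_ends one0(1)[OF v] by metis
  then show ?thesis using cends_two[OF one0(1)[OF v] uw] one0(2)[OF v] by auto
qed

lemma sqW: "v \<in> V0 \<Longrightarrow> sqW v \<in> CV \<and> v \<in> sqW v"
proof -
  assume "v \<in> V0"
  then obtain W where "W \<in> CV" "v \<in> W" using V0_in_sq by blast
  then show ?thesis using sqW_eq by simp
qed

lemma A0_other:
  assumes g: "g \<in> A0" and u: "u \<in> ends0 g"
  obtains w where "ends0 g = {u,w}" "u \<noteq> w" "u \<in> V0" "w \<in> V0" "sqW u \<noteq> sqW w"
    "one0 u = g" "one0 w = g" "cends g = {sqW u, sqW w}"
proof -
  obtain a b where ab: "ends0 g = {a,b}" "a \<noteq> b" "a \<in> V0" "b \<in> V0" using A0_ends g by metis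
  obtain w where w: "ends0 g = {u,w}" "u \<noteq> w" "u \<in> V0" "w \<in> V0" using ab u by auto
  obtain Wu Ww where WW: "Wu \<in> CV" "Ww \<in> CV" "u \<in> Wu" "w \<in> Ww" "Wu \<noteq> Ww" "cends g = {Wu,Ww}"
    using cends_two[OF g w(1,2)] by auto
  have "sqW u = Wu" "sqW w = Ww" using sqW_eq WW by auto
  moreover have "one0 u = g" "one0 w = g" using one0_end g w by auto
  ultimately show ?thesis using that w WW by auto
qed

definition sqE :: "'v set \<Rightarrow> 'e set" where
  "sqE W = {e\<in>E0. x0 e = 1/2 \<and> ends0 e \<subseteq> W}"

lemma half_in_sq: "e \<in> E0 \<Longrightarrow> x0 e = 1/2 \<Longrightarrow> \<exists>Q\<in>Sq. e \<in> Q"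
proof -
  assume "e \<in> E0" "x0 e = 1/2"
  moreover have "\<Union>Sq = {e\<in>E0. x0 e = 1/2}" using bc unfolding boyd_carr_point_def by (elim conjE)
  ultimately show ?thesis by auto
qed

lemma Sq_sub: "Q \<in> Sq \<Longrightarrow> Q \<subseteq> {e\<in>E0. x0 e = 1/2}"
  unfolding half_squares_def by auto

lemma ends0_ne: "e \<in> E0 \<Longrightarrow> ends0 e \<noteq> {}"
  using wf0 unfolding wf_graph_def by fastforce

lemma sqE_eq: "Q \<in> Sq \<Longrightarrow> sqE (verts ends0 Q) = Q"
proof
  assume Q: "Q \<in> Sq"
  show "Q \<subseteq> sqE (verts ends0 Q)" using Sq_sub[OF Q] unfolding sqE_def verts_def by auto
  show "sqE (verts ends0 Q) \<subseteq> Q"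
  proof
    fix e assume "e \<in> sqE (verts ends0 Q)"
    then have e: "e \<in> E0" "x0 e = 1/2" "ends0 e \<subseteq> verts ends0 Q" unfolding sqE_def by auto
    obtain Q' where Q': "Q' \<in> Sq" "e \<in> Q'" using half_in_sq e by blast
    have "ends0 e \<subseteq> verts ends0 Q'" using Q' unfolding verts_def by auto
    moreover have "ends0 e \<noteq> {}" using ends0_ne e(1) by auto
    ultimately have "verts ends0 Q \<inter> verts ends0 Q' \<noteq> {}" using e(3) by blast
    then have "Q = Q'" using sq_disj Q Q' by blast
    then show "e \<in> Q" using Q' by simp
  qed
qed

lemma four_cycle_cong:
  assumes "\<forall>e\<in>C. f e = g e" "four_cycle f C"
  shows "four_cycle g C"
proof -
  from assms(2) obtain a b c d e1 e2 e3 e4 where h: "distinct [a,b,c,d]" "distinct [e1,e2,e3,e4]"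
     "C = {e1,e2,e3,e4}" "f e1 = {a,b}" "f e2 = {b,c}" "f e3 = {c,d}" "f e4 = {d,a}"
    unfolding four_cycle_def by blast
  then have "g e1 = {a,b}" "g e2 = {b,c}" "g e3 = {c,d}" "g e4 = {d,a}" using assms(1) by auto
  then show ?thesis unfolding four_cycle_def using h(1-3) by blast
qed

lemma halfsq_eq: "half_squares E ends x = Sq"
proof -
  have fc: "four_cycle ends C = four_cycle ends0 C" if "C \<subseteq> {e\<in>E0. x0 e = 1/2}" for C
  proof -
    have "\<forall>e\<in>C. ends e = ends0 e" using that halfends by auto
    then show ?thesis using four_cycle_cong[of C ends ends0] four_cycle_cong[of C ends0 ends] by auto
  qed
  show ?thesis unfolding half_squares_def using halfeq fc by auto
qed

lemma four_cycle_H: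
  assumes dv: "distinct [a,b,c,d]" and de: "distinct [e1,e2,e3,e4]"
    and en: "ends0 e1 = {a,b}" "ends0 e2 = {b,c}" "ends0 e3 = {c,d}" "ends0 e4 = {d,a}"
    and hh: "h1 \<noteq> h2" "{e1,e2,e3,e4} \<inter> H = {h1,h2}" "ends0 h1 \<inter> ends0 h2 = {}"
  shows "{e1,e2,e3,e4} \<inter> H = {e1,e3} \<or> {e1,e2,e3,e4} \<inter> H = {e2,e4}"
proof -
  have h: "h1 \<in> {e1,e2,e3,e4}" "h2 \<in> {e1,e2,e3,e4}" using hh by auto
  have "(h1 = e1 \<and> h2 = e3) \<or> (h1 = e3 \<and> h2 = e1) \<or> (h1 = e2 \<and> h2 = e4) \<or> (h1 = e4 \<and> h2 = e2)"
    using h hh(1,3) en dv by auto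
  then show ?thesis using hh(2) by blast
qed

lemma sq_struct:
  assumes W: "W \<in> CV"
  shows "\<exists>a b c d e1 e2 e3 e4. distinct [a,b,c,d] \<and> distinct [e1,e2,e3,e4] \<and>
     W = {a,b,c,d} \<and> sqE W = {e1,e2,e3,e4} \<and>
     ends0 e1 = {a,b} \<and> ends0 e2 = {b,c} \<and> ends0 e3 = {c,d} \<and> ends0 e4 = {d,a} \<and>
     sqE W \<inter> H = {e1,e3}"
proof -
  obtain Q where Q: "Q \<in> Sq" "W = verts ends0 Q" using W unfolding contr_V_def by auto
  obtain a b c d e1 e2 e3 e4 where fc: "distinct [a,b,c,d]" "distinct [e1,e2,e3,e4]" "Q = {e1,e2,e3,e4}"
     "ends0 e1 = {a,b}" "ends0 e2 = {b,c}" "ends0 e3 = {c,d}" "ends0 e4 = {d,a}"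
  proof -
    have "four_cycle ends0 Q" using Q unfolding half_squares_def by auto
    then show ?thesis using that unfolding four_cycle_def by blast
  qed
  have Wv: "W = {a,b,c,d}" using Q fc unfolding verts_def by auto
  have sE: "sqE W = {e1,e2,e3,e4}" using sqE_eq Q fc by simp
  obtain h1 h2 where hh: "h1 \<noteq> h2" "Q \<inter> H = {h1,h2}" "ends h1 \<inter> ends h2 = {}"
    using opp Q halfsq_eq by auto
  have "h1 \<in> Q" "h2 \<in> Q" using hh by auto
  then have "ends h1 = ends0 h1" "ends h2 = ends0 h2" using Sq_sub[OF Q(1)] halfends by auto
  then have hh3: "ends0 h1 \<inter> ends0 h2 = {}" using hh by simp
  have "{e1,e2,e3,e4} \<inter> H = {e1,e3} \<or> {e1,e2,e3,e4} \<inter> H = {e2,e4}"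
    using four_cycle_H[OF fc(1,2,4-7) hh(1) _ hh3] hh(2) fc(3) by simp
  then show ?thesis
  proof
    assume "{e1,e2,e3,e4} \<inter> H = {e1,e3}"
    then have h13: "sqE W \<inter> H = {e1,e3}" using sE by simp
    show ?thesis
      apply (rule exI[where x=a], rule exI[where x=b], rule exI[where x=c], rule exI[where x=d], rule exI[where x=e1], rule exI[where x=e2], rule exI[where x=e3], rule exI[where x=e4])
      using fc Wv sE h13 by simp
  next
    assume a: "{e1,e2,e3,e4} \<inter> H = {e2,e4}"
    have "distinct [b,c,d,a]" "distinct [e2,e3,e4,e1]" using fc by auto
    moreover have "W = {b,c,d,a}" using Wv by blast
    moreover have "sqE W = {e2,e3,e4,e1}" using sE by blast
    moreover have "sqE W \<inter> H = {e2,e4}" using sE a by simp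
    ultimately have hh: "distinct [b,c,d,a]" "distinct [e2,e3,e4,e1]" "W = {b,c,d,a}" "sqE W = {e2,e3,e4,e1}" "sqE W \<inter> H = {e2,e4}" by auto
    show ?thesis
      apply (rule exI[where x=b], rule exI[where x=c], rule exI[where x=d], rule exI[where x=a], rule exI[where x=e2], rule exI[where x=e3], rule exI[where x=e4], rule exI[where x=e1])
      using hh fc(4-7) by simp
  qed
qed

end

context L1 begin

lemma pathf:
  assumes "f \<in> A0"
  shows "is_path ends (pv f) (pe f)" "{hd (pv f), last (pv f)} = ends0 f" "set (pe f) \<subseteq> E"
    "\<forall>e\<in>set (pe f). x e = 1"
  using paths assms unfolding contr_E_def by auto

lemma pe_disj: "f \<in> A0 \<Longrightarrow> g \<in> A0 \<Longrightarrow> f \<noteq> g \<Longrightarrow> set (pe f) \<inter> set (pe g) = {}"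
  using pdisj unfolding contr_E_def by auto

lemma ends0_in_pv: "f \<in> A0 \<Longrightarrow> u \<in> ends0 f \<Longrightarrow> u \<in> set (pv f)"
proof -
  assume f: "f \<in> A0" "u \<in> ends0 f"
  have "pv f \<noteq> []" using pathf(1)[OF f(1)] unfolding is_path_def by auto
  then have "hd (pv f) \<in> set (pv f)" "last (pv f) \<in> set (pv f)" by auto
  moreover have "u \<in> {hd (pv f), last (pv f)}" using pathf(2)[OF f(1)] f(2) by simp
  ultimately show ?thesis by blast
qed

lemma pe_conn:
  assumes f: "f \<in> A0" and F: "set (pe f) \<subseteq> F" and u: "u \<in> ends0 f" and w: "w \<in> ends0 f"
  shows "(u,w) \<in> (adj F ends)\<^sup>*"
  using path_all[OF pathf(1)[OF f] F ends0_in_pv[OF f u] ends0_in_pv[OF f w]] .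

definition owner :: "'e \<Rightarrow> 'e" where
  "owner e = (THE f. f \<in> A0 \<and> e \<in> set (pe f))"

lemma owner_eq: "f \<in> A0 \<Longrightarrow> e \<in> set (pe f) \<Longrightarrow> owner e = f"
proof -
  assume f: "f \<in> A0" "e \<in> set (pe f)"
  show ?thesis unfolding owner_def
  proof (rule the_equality)
    show "f \<in> A0 \<and> e \<in> set (pe f)" using f by simp
    fix g assume g: "g \<in> A0 \<and> e \<in> set (pe g)"
    show "g = f"
    proof (rule ccontr)
      assume "g \<noteq> f"
      then have "set (pe g) \<inter> set (pe f) = {}" using pe_disj g f by simp
      then show False using g f by auto
    qed
  qed
qed

lemma owner: "e \<in> E \<Longrightarrow> x e = 1 \<Longrightarrow> owner e \<in> A0 \<and> e \<in> set (pe (owner e))"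
proof -
  assume "e \<in> E" "x e = 1"
  then have "e \<in> (\<Union>f\<in>{f\<in>E0. x0 f = 1}. set (pe f))" using oneeq by auto
  then obtain f where "f \<in> A0" "e \<in> set (pe f)" unfolding contr_E_def by auto
  then show ?thesis using owner_eq by simp
qed

lemma half_facts: "e \<in> E \<Longrightarrow> x e = 1/2 \<Longrightarrow> e \<in> E0 \<and> x0 e = 1/2 \<and> ends e = ends0 e"
  using halfeq halfends by auto

definition sqOf :: "'e \<Rightarrow> 'v set" where
  "sqOf e = sqW (SOME u. u \<in> ends0 e)"

lemma sqE_sub: "e \<in> sqE W \<Longrightarrow> e \<in> E \<and> x e = 1/2 \<and> ends e = ends0 e"
  using halfeq halfends unfolding sqE_def by auto

lemma sqOf_eq: "W \<in> CV \<Longrightarrow> e \<in> sqE W \<Longrightarrow> sqOf e = W"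
proof -
  assume W: "W \<in> CV" and e: "e \<in> sqE W"
  then have "ends0 e \<noteq> {}" "ends0 e \<subseteq> W" using ends0_ne unfolding sqE_def by auto
  moreover have "(SOME u. u \<in> ends0 e) \<in> ends0 e" using \<open>ends0 e \<noteq> {}\<close> by (simp add: some_in_eq)
  ultimately have "(SOME u. u \<in> ends0 e) \<in> W" by blast
  then show ?thesis unfolding sqOf_def using sqW_eq W by simp
qed

lemma half_sq: "e \<in> E \<Longrightarrow> x e = 1/2 \<Longrightarrow> sqOf e \<in> CV \<and> e \<in> sqE (sqOf e)"
proof -
  assume e: "e \<in> E" "x e = 1/2"
  then have e0: "e \<in> E0" "x0 e = 1/2" using half_facts by auto
  obtain Q where Q: "Q \<in> Sq" "e \<in> Q" using half_in_sq e0 by blast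
  have W: "verts ends0 Q \<in> CV" using Q unfolding contr_V_def by auto
  have "e \<in> sqE (verts ends0 Q)" using sqE_eq Q by simp
  then show ?thesis using sqOf_eq W by simp
qed

lemma sqE_unique: "W \<in> CV \<Longrightarrow> W' \<in> CV \<Longrightarrow> e \<in> sqE W \<Longrightarrow> e \<in> sqE W' \<Longrightarrow> W = W'"
proof -
  assume a: "W \<in> CV" "W' \<in> CV" "e \<in> sqE W" "e \<in> sqE W'"
  have "sqOf e = W" using sqOf_eq[OF a(1) a(3)] .
  moreover have "sqOf e = W'" using sqOf_eq[OF a(2) a(4)] .
  ultimately show ?thesis by simp
qed

lemma sq_obtain:
  assumes "W \<in> CV"
  obtains a b c d e1 e2 e3 e4 where "distinct [a,b,c,d]" "distinct [e1,e2,e3,e4]"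
     "W = {a,b,c,d}" "sqE W = {e1,e2,e3,e4}"
     "ends0 e1 = {a,b}" "ends0 e2 = {b,c}" "ends0 e3 = {c,d}" "ends0 e4 = {d,a}"
     "sqE W \<inter> H = {e1,e3}"
  using sq_struct[OF assms] by (elim exE conjE) (rule that; assumption)

definition betaE :: "bool \<Rightarrow> 'v set \<Rightarrow> 'e" where
  "betaE t W = (if t then (SOME e. e \<in> sqE W \<inter> H)
     else (SOME e. e \<in> sqE W \<inter> H \<and> e \<noteq> (SOME e. e \<in> sqE W \<inter> H)))"

lemma betaE:
  assumes W: "W \<in> CV"
  shows "betaE True W \<in> sqE W \<inter> H" "betaE False W \<in> sqE W \<inter> H" "betaE True W \<noteq> betaE False W"
    "sqE W \<inter> H \<subseteq> {betaE True W, betaE False W}"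
proof -
  obtain a b c d e1 e2 e3 e4 where s0: "distinct [a,b,c,d]" "distinct [e1,e2,e3,e4]"
     "W = {a,b,c,d}" "sqE W = {e1,e2,e3,e4}"
     "ends0 e1 = {a,b}" "ends0 e2 = {b,c}" "ends0 e3 = {c,d}" "ends0 e4 = {d,a}"
     "sqE W \<inter> H = {e1,e3}" using sq_obtain[OF W] .
  have s: "distinct [e1,e2,e3,e4]" "sqE W \<inter> H = {e1,e3}" using s0 by auto
  define bb where "bb = (SOME e. e \<in> sqE W \<inter> H)"
  define bc where "bc = (SOME e. e \<in> sqE W \<inter> H \<and> e \<noteq> bb)"
  have bT: "betaE True W = bb" "betaE False W = bc" unfolding betaE_def bb_def bc_def by simp_all
  have "e1 \<in> sqE W \<inter> H" using s by simp
  then have b1: "bb \<in> sqE W \<inter> H" unfolding bb_def by (rule someI)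
  have "bb = e1 \<or> bb = e3" using b1 s(2) by blast
  then have "\<exists>e. e \<in> sqE W \<inter> H \<and> e \<noteq> bb" using s by auto
  then have b2: "bc \<in> sqE W \<inter> H \<and> bc \<noteq> bb" unfolding bc_def by (rule someI_ex)
  show "betaE True W \<in> sqE W \<inter> H" "betaE False W \<in> sqE W \<inter> H" "betaE True W \<noteq> betaE False W"
    unfolding bT using b1 b2 by auto
  have "bc = e1 \<or> bc = e3" using b2 s(2) by blast
  then show "sqE W \<inter> H \<subseteq> {betaE True W, betaE False W}" unfolding bT using s \<open>bb = e1 \<or> bb = e3\<close> b2 by auto
qed

definition matched :: "'e set \<Rightarrow> 'v \<Rightarrow> bool" where
  "matched M v \<longleftrightarrow> v \<in> V0 \<and> one0 v \<in> M"

definition rho :: "'e \<Rightarrow> 'v" where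
  "rho f = (SOME v. v \<in> ends0 f)"

definition pend :: "'e set \<Rightarrow> bool \<Rightarrow> 'v \<Rightarrow> bool" where
  "pend M t v \<longleftrightarrow> matched M v \<and> (v = rho (one0 v) \<longleftrightarrow> t)"

definition keepW :: "'e set \<Rightarrow> bool \<Rightarrow> 'v set \<Rightarrow> 'e \<Rightarrow> bool" where
  "keepW M t W e \<longleftrightarrow> (\<forall>p\<in>W. pend M t p \<longrightarrow> p \<notin> ends0 e) \<and>
     (\<forall>p\<in>W. matched M p \<and> \<not> pend M t p \<longrightarrow> e \<in> H \<longrightarrow> p \<in> ends0 e) \<and>
     ((\<forall>p\<in>W. \<not> matched M p) \<longrightarrow> e \<noteq> betaE t W)"

definition keep :: "'e set \<Rightarrow> bool \<Rightarrow> 'e \<Rightarrow> bool" where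
  "keep M t e = keepW M t (sqOf e) e"

definition mult :: "'e set \<Rightarrow> bool \<Rightarrow> 'e \<Rightarrow> nat" where
  "mult M t e = (if e \<in> E \<and> x e = 1 then (if owner e \<in> M then 2 else 1)
      else if e \<in> E \<and> x e = 1/2 \<and> keep M t e then 1 else 0)"

end


lemma collect_cong2: "(\<And>e. e \<in> S \<Longrightarrow> k e \<longleftrightarrow> P e) \<Longrightarrow> S = T \<Longrightarrow> {e\<in>S. k e} = {e\<in>T. P e}"
  by auto

lemma is_path_cong: "(\<forall>e\<in>set es. f e = g e) \<Longrightarrow> is_path f vs es \<Longrightarrow> is_path g vs es"
  unfolding is_path_def by (metis nth_mem)

locale L2 = L1 +
  fixes M
  assumes Msub: "M \<subseteq> contr_E E0 x0"
    and Mmatch: "matching (contr_E E0 x0) (contr_ends E0 ends0 x0) M"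
    and M2vc: "two_vertex_connected (contr_V E0 ends0 x0) (contr_E E0 x0 - M) (contr_ends E0 ends0 x0)"
begin

lemma cends_mem: "g \<in> A0 \<Longrightarrow> W \<in> CV \<Longrightarrow> p \<in> W \<Longrightarrow> p \<in> ends0 g \<Longrightarrow> W \<in> cends g"
  unfolding contr_ends_def by auto

lemma uniq_matched:
  assumes W: "W \<in> CV" and p: "p \<in> W" "matched M p" and q: "q \<in> W" "matched M q"
  shows "p = q"
proof -
  have pV: "p \<in> V0" "one0 p \<in> M" and qV: "q \<in> V0" "one0 q \<in> M" using p q unfolding matched_def by auto
  have gA: "one0 p \<in> A0" "one0 q \<in> A0" using pV qV Msub by auto
  have "W \<in> cends (one0 p)" using cends_mem[OF gA(1) W p(1) one0(2)[OF pV(1)]] .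
  moreover have "W \<in> cends (one0 q)" using cends_mem[OF gA(2) W q(1) one0(2)[OF qV(1)]] .
  ultimately have eq: "one0 p = one0 q" using Mmatch pV(2) qV(2) unfolding matching_def by blast
  obtain w where w: "ends0 (one0 p) = {p,w}" "sqW p \<noteq> sqW w" using A0_other[OF gA(1) one0(2)[OF pV(1)]] by metis
  have "q \<in> {p,w}" using one0(2)[OF qV(1)] eq w(1) by simp
  moreover have "sqW p = W" "sqW q = W" using sqW_eq W p q by auto
  ultimately show ?thesis using w(2) by auto
qed

lemma pend_matched: "pend M t p \<Longrightarrow> matched M p"
  unfolding pend_def by simp

lemma pend_not: "matched M p \<Longrightarrow> pend M t p \<longleftrightarrow> \<not> pend M (\<not> t) p"
  unfolding pend_def by auto

lemma partner:
  assumes p: "matched M p"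
  obtains w where "ends0 (one0 p) = {p,w}" "p \<noteq> w" "w \<in> V0" "matched M w"
    "pend M t p \<longleftrightarrow> \<not> pend M t w"
proof -
  have pV: "p \<in> V0" "one0 p \<in> M" using p unfolding matched_def by auto
  have gA: "one0 p \<in> A0" using pV Msub by auto
  obtain w where w: "ends0 (one0 p) = {p,w}" "p \<noteq> w" "w \<in> V0" "one0 w = one0 p"
    using A0_other[OF gA one0(2)[OF pV(1)]] by metis
  have mw: "matched M w" using w pV unfolding matched_def by simp
  have "rho (one0 p) \<in> ends0 (one0 p)" unfolding rho_def using w(1) by (metis insertI1 someI)
  then have "rho (one0 p) = p \<or> rho (one0 p) = w" using w(1) by auto
  then have "pend M t p \<longleftrightarrow> \<not> pend M t w" using p mw w(2,4) unfolding pend_def by auto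
  then show ?thesis using that w(1-3) mw by blast
qed

lemma keepW_matched:
  assumes W: "W \<in> CV" and p: "p \<in> W" "matched M p"
  shows "keepW M t W e \<longleftrightarrow> (pend M t p \<longrightarrow> p \<notin> ends0 e) \<and> (\<not> pend M t p \<longrightarrow> e \<in> H \<longrightarrow> p \<in> ends0 e)"
proof -
  have u: "\<And>q. q \<in> W \<Longrightarrow> matched M q \<Longrightarrow> q = p" using uniq_matched W p by blast
  have u2: "\<And>q. q \<in> W \<Longrightarrow> pend M t q \<Longrightarrow> q = p" using u pend_matched by blast
  show ?thesis unfolding keepW_def using p u u2 by blast
qed

lemma keepW_unmatched:
  assumes "\<forall>p\<in>W. \<not> matched M p"
  shows "keepW M t W e \<longleftrightarrow> e \<noteq> betaE t W"
  using assms pend_matched unfolding keepW_def by blast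

lemma sq_path:
  assumes W: "W \<in> CV"
  shows "\<exists>vs es. is_path ends vs es \<and> set es = {e\<in>sqE W. keep M t e} \<and>
           set vs = W - {p. pend M t p} \<and> \<not> matched M (hd vs) \<and> \<not> matched M (last vs)"
proof -
  obtain a b c d e1 e2 e3 e4 where s: "distinct [a,b,c,d]" "distinct [e1,e2,e3,e4]"
     "W = {a,b,c,d}" "sqE W = {e1,e2,e3,e4}"
     "ends0 e1 = {a,b}" "ends0 e2 = {b,c}" "ends0 e3 = {c,d}" "ends0 e4 = {d,a}"
     "sqE W \<inter> H = {e1,e3}" using sq_obtain[OF W] .
  have uniq: "\<forall>p\<in>{a,b,c,d}. \<forall>q\<in>{a,b,c,d}. matched M p \<and> matched M q \<longrightarrow> p = q"
    using uniq_matched W s(3) by blast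
  have pdmt: "\<forall>p. pend M t p \<longrightarrow> matched M p" using pend_matched by blast
  have beta: "betaE t W = e1 \<or> betaE t W = e3" using betaE(1,2)[OF W] s(9) by (cases t) auto
  have Hs: "\<And>e. e \<in> sqE W \<Longrightarrow> e \<in> H \<longleftrightarrow> e \<in> {e1,e3}" using s(9) by blast
  have kp: "\<And>e. e \<in> sqE W \<Longrightarrow> keep M t e = keepW M t W e" unfolding keep_def using sqOf_eq W by simp
  have K: "{e\<in>sqE W. keep M t e} = {e\<in>{e1,e2,e3,e4}. (\<forall>p\<in>{a,b,c,d}. pend M t p \<longrightarrow> p \<notin> ends0 e) \<and>
               (\<forall>p\<in>{a,b,c,d}. matched M p \<and> \<not> pend M t p \<longrightarrow> e\<in>{e1,e3} \<longrightarrow> p \<in> ends0 e) \<and>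
               ((\<forall>p\<in>{a,b,c,d}. \<not> matched M p) \<longrightarrow> e \<noteq> betaE t W)}"
  proof -
    have "keep M t e \<longleftrightarrow> (\<forall>p\<in>{a,b,c,d}. pend M t p \<longrightarrow> p \<notin> ends0 e) \<and>
               (\<forall>p\<in>{a,b,c,d}. matched M p \<and> \<not> pend M t p \<longrightarrow> e\<in>{e1,e3} \<longrightarrow> p \<in> ends0 e) \<and>
               ((\<forall>p\<in>{a,b,c,d}. \<not> matched M p) \<longrightarrow> e \<noteq> betaE t W)" if e: "e \<in> sqE W" for e
      unfolding kp[OF e] keepW_def s(3)[symmetric] Hs[OF e] by (rule refl)
    then show ?thesis by (rule collect_cong2[OF _ s(4)])
  qed
  obtain vs es where ve: "is_path ends0 vs es" "set es = {e\<in>sqE W. keep M t e}"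
    "set vs = {a,b,c,d} - {p. pend M t p}" "\<not> matched M (hd vs)" "\<not> matched M (last vs)"
    using sq_abstract[OF s(1,2,5-8) uniq pdmt beta K] by blast
  have "\<forall>e\<in>set es. ends0 e = ends e" using ve(2) sqE_sub by auto
  then have "is_path ends vs es" using is_path_cong ve(1) by blast
  then show ?thesis using ve s(3) by blast
qed

end

context L2 begin

abbreviation "F1 t \<equiv> {e\<in>E. mult M t e \<ge> 1}"

lemma pe_F1: "f \<in> A0 \<Longrightarrow> set (pe f) \<subseteq> F1 t"
proof
  fix e assume f: "f \<in> A0" and e: "e \<in> set (pe f)"
  have "e \<in> E" "x e = 1" using pathf[OF f] e by auto
  then show "e \<in> F1 t" unfolding mult_def by auto
qed

lemma kept_F1: "e \<in> sqE W \<Longrightarrow> keep M t e \<Longrightarrow> e \<in> F1 t"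
proof -
  assume e: "e \<in> sqE W" "keep M t e"
  then have "e \<in> E" "x e = 1/2" using sqE_sub by auto
  then show "e \<in> F1 t" using e unfolding mult_def by auto
qed

lemma mult1: "e \<in> E \<Longrightarrow> mult M t e = 1 \<Longrightarrow> (x e = 1 \<and> owner e \<notin> M) \<or> (x e = 1/2 \<and> keep M t e)"
  unfolding mult_def by (auto split: if_splits)

lemma sq_conn:
  assumes W: "W \<in> CV" and u: "u \<in> W" "\<not> pend M t u" and w: "w \<in> W" "\<not> pend M t w"
    and F: "{e\<in>sqE W. keep M t e} \<subseteq> F"
  shows "(u,w) \<in> (adj F ends)\<^sup>*"
proof -
  obtain vs es where ve: "is_path ends vs es" "set es = {e\<in>sqE W. keep M t e}"
           "set vs = W - {p. pend M t p}" using sq_path[OF W] by blast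
  show ?thesis using path_all[OF ve(1) _ _ ] ve F u w by auto
qed

lemma unm_not_pend: "\<not> matched M p \<Longrightarrow> \<not> pend M t p"
  using pend_matched by blast

lemma A0M_unm: "g \<in> A0 \<Longrightarrow> g \<notin> M \<Longrightarrow> u \<in> ends0 g \<Longrightarrow> \<not> matched M u"
  unfolding matched_def using one0_end by auto

lemma lift:
  assumes Fc: "\<forall>g\<in>Fc. g \<in> A0 \<and> g \<notin> M \<and> cends g \<subseteq> Z" and Z: "Z \<subseteq> CV"
    and Fp: "\<forall>g\<in>Fc. set (pe g) \<subseteq> F" and Fk: "\<forall>W\<in>Z. {e\<in>sqE W. keep M t e} \<subseteq> F"
    and P: "(P,P') \<in> (adj Fc cends)\<^sup>*" "P \<in> Z"
  shows "\<forall>u\<in>P. \<forall>w\<in>P'. \<not> pend M t u \<longrightarrow> \<not> pend M t w \<longrightarrow> (u,w) \<in> (adj F ends)\<^sup>*"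
  using P(1)
proof (induction rule: rtrancl_induct)
  case base
  then show ?case using sq_conn P(2) Z Fk by blast
next
  case (step y z)
  obtain g where g: "g \<in> Fc" "cends g = {y,z}" using step(2) unfolding adj_def by auto
  have gA: "g \<in> A0" "g \<notin> M" "cends g \<subseteq> Z" using Fc g by auto
  obtain a b where ab: "ends0 g = {a,b}" "a \<noteq> b" using A0_ends[OF gA(1)] by metis
  obtain w' where w': "ends0 g = {a,w'}" "a \<noteq> w'" "a \<in> V0" "w' \<in> V0" "sqW a \<noteq> sqW w'"
      "cends g = {sqW a, sqW w'}" using A0_other[OF gA(1)] ab by (metis insertI1)
  have "\<exists>yv zv. ends0 g = {yv,zv} \<and> yv \<in> y \<and> zv \<in> z \<and> yv \<in> V0 \<and> zv \<in> V0"
  proof -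
    have "(y = sqW a \<and> z = sqW w') \<or> (y = sqW w' \<and> z = sqW a)"
      using g(2) w'(5,6) by (metis doubleton_eq_iff)
    moreover have "a \<in> sqW a" "w' \<in> sqW w'" using sqW w' by auto
    ultimately show ?thesis using w' by (metis insert_commute)
  qed
  then obtain yv zv where yz: "ends0 g = {yv,zv}" "yv \<in> y" "zv \<in> z" "yv \<in> V0" "zv \<in> V0" by blast
  have np: "\<not> pend M t yv" "\<not> pend M t zv" using A0M_unm[OF gA(1,2)] unm_not_pend yz(1) by auto
  have zZ: "z \<in> Z" using gA(3) g(2) by auto
  show ?case
  proof (intro ballI impI)
    fix u w assume u: "u \<in> P" "\<not> pend M t u" and w: "w \<in> z" "\<not> pend M t w"
    have 1: "(u, yv) \<in> (adj F ends)\<^sup>*" using step(3) u yz np by blast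
    have 2: "(yv, zv) \<in> (adj F ends)\<^sup>*" using pe_conn[OF gA(1)] Fp g(1) yz(1) by auto
    have 3: "(zv, w) \<in> (adj F ends)\<^sup>*" using sq_conn[OF _ yz(3) np(2) w] zZ Z Fk by blast
    show "(u, w) \<in> (adj F ends)\<^sup>*" using 1 2 3 by (meson rtrancl_trans)
  qed
qed

end

context L2 begin

lemma conn_all: "W \<in> CV \<Longrightarrow> W' \<in> CV \<Longrightarrow> (W,W') \<in> (adj (A0 - M) cends)\<^sup>*"
  using M2vc unfolding two_vertex_connected_def connected_graph_def by blast

lemma conn_del: "W0 \<in> CV \<Longrightarrow> W \<in> CV - {W0} \<Longrightarrow> W' \<in> CV - {W0} \<Longrightarrow>
   (W,W') \<in> (adj {h\<in>A0 - M. W0 \<notin> cends h} cends)\<^sup>*"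
  using M2vc unfolding two_vertex_connected_def connected_graph_def by blast

lemma cends_sub: "cends g \<subseteq> CV"
  unfolding contr_ends_def by auto

lemma attach_conn:
  assumes u: "u \<in> V0" "\<not> pend M t u" and w: "w \<in> V0" "\<not> pend M t w"
  shows "(u,w) \<in> (adj (F1 t) ends)\<^sup>*"
proof -
  have su: "sqW u \<in> CV" "u \<in> sqW u" and sw: "sqW w \<in> CV" "w \<in> sqW w" using sqW u w by auto
  have "\<forall>a\<in>sqW u. \<forall>b\<in>sqW w. \<not> pend M t a \<longrightarrow> \<not> pend M t b \<longrightarrow> (a,b) \<in> (adj (F1 t) ends)\<^sup>*"
  proof (rule lift[OF _ _ _ _ conn_all[OF su(1) sw(1)] su(1)])
    show "\<forall>g\<in>A0 - M. g \<in> A0 \<and> g \<notin> M \<and> cends g \<subseteq> CV" using cends_sub by auto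
    show "CV \<subseteq> CV" by simp
    show "\<forall>g\<in>A0 - M. set (pe g) \<subseteq> F1 t" using pe_F1 by auto
    show "\<forall>W\<in>CV. {e\<in>sqE W. keep M t e} \<subseteq> F1 t" using kept_F1 by auto
  qed
  then show ?thesis using su sw u w by blast
qed

lemma V0_to_attached:
  assumes v: "v \<in> V0"
  shows "\<exists>a\<in>V0. \<not> pend M t a \<and> (v,a) \<in> (adj (F1 t) ends)\<^sup>*"
proof (cases "pend M t v")
  case False
  then show ?thesis using v by blast
next
  case True
  then have m: "matched M v" using pend_matched by blast
  obtain w where w: "ends0 (one0 v) = {v,w}" "w \<in> V0" "pend M t v \<longleftrightarrow> \<not> pend M t w"
    using partner[OF m] by metis
  have "(v,w) \<in> (adj (F1 t) ends)\<^sup>*" using pe_conn[OF one0(1)[OF v] pe_F1[OF one0(1)[OF v]]] w(1) by auto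
  then show ?thesis using w True by blast
qed

lemma inner_sub: "inner vs \<subseteq> set vs"
  unfolding inner_def by (cases vs) (auto dest: in_set_butlastD)

lemma to_attached:
  assumes v: "v \<in> V"
  shows "\<exists>a\<in>V0. \<not> pend M t a \<and> (v,a) \<in> (adj (F1 t) ends)\<^sup>*"
proof (cases "v \<in> V0")
  case True
  then show ?thesis using V0_to_attached by blast
next
  case False
  then obtain f where f: "f \<in> A0" "v \<in> inner (pv f)" using v Veq unfolding contr_E_def by auto
  have pvne: "pv f \<noteq> []" using pathf(1)[OF f(1)] unfolding is_path_def by auto
  have hd: "hd (pv f) \<in> ends0 f" using pathf(2)[OF f(1)] by auto
  then have hV: "hd (pv f) \<in> V0" using wf0 f(1) unfolding wf_graph_def contr_E_def by auto
  have vin: "v \<in> set (pv f)" using subsetD[OF inner_sub f(2)] .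
  have hin: "hd (pv f) \<in> set (pv f)" using pvne by simp
  have "(v, hd (pv f)) \<in> (adj (F1 t) ends)\<^sup>*"
    using path_all[OF pathf(1)[OF f(1)] pe_F1[OF f(1)] vin hin] .
  then show ?thesis using V0_to_attached[OF hV] by (meson rtrancl_trans)
qed

lemma conn_F1: "u \<in> V \<Longrightarrow> w \<in> V \<Longrightarrow> (u,w) \<in> (adj (F1 t) ends)\<^sup>*"
proof -
  assume "u \<in> V" "w \<in> V"
  then obtain a b where a: "a \<in> V0" "\<not> pend M t a" "(u,a) \<in> (adj (F1 t) ends)\<^sup>*"
    and b: "b \<in> V0" "\<not> pend M t b" "(w,b) \<in> (adj (F1 t) ends)\<^sup>*" using to_attached by blast
  have ab: "(a,b) \<in> (adj (F1 t) ends)\<^sup>*" using attach_conn[OF a(1,2) b(1,2)] .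
  have bw: "(b,w) \<in> (adj (F1 t) ends)\<^sup>*" using adj_rtrancl_sym[OF b(3)] .
  show ?thesis using rtrancl_trans[OF rtrancl_trans[OF a(3) ab] bw] .
qed

end


lemma pair_conn:
  assumes "{a,b} = {p,q}" "(p,q) \<in> (adj F ends)\<^sup>*"
  shows "(a,b) \<in> (adj F ends)\<^sup>*"
proof -
  have "(a = p \<and> b = q) \<or> (a = q \<and> b = p)" using assms(1) unfolding doubleton_eq_iff by blast
  then show ?thesis
  proof
    assume "a = p \<and> b = q" then show ?thesis using assms(2) by simp
  next
    assume "a = q \<and> b = p" then show ?thesis using adj_rtrancl_sym[OF assms(2)] by simp
  qed
qed

context L2 begin

lemma CV_sub: "W \<in> CV \<Longrightarrow> W \<subseteq> V0"
proof -
  assume "W \<in> CV"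
  then obtain Q where Q: "Q \<in> Sq" "W = verts ends0 Q" unfolding contr_V_def by auto
  have "\<forall>e\<in>Q. ends0 e \<subseteq> V0" using Sq_sub[OF Q(1)] wf0 unfolding wf_graph_def by auto
  then show ?thesis using Q(2) unfolding verts_def by auto
qed

lemma sq_other_unmatched:
  assumes W: "W \<in> CV" and u: "u \<in> W"
  shows "\<exists>b'\<in>W. b' \<noteq> u \<and> \<not> matched M b'"
proof (rule ccontr)
  assume na: "\<not> ?thesis"
  obtain a b c d e1 e2 e3 e4 where s: "distinct [a,b,c,d]" "distinct [e1,e2,e3,e4]"
     "W = {a,b,c,d}" "sqE W = {e1,e2,e3,e4}"
     "ends0 e1 = {a,b}" "ends0 e2 = {b,c}" "ends0 e3 = {c,d}" "ends0 e4 = {d,a}"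
     "sqE W \<inter> H = {e1,e3}" using sq_obtain[OF W] .
  have m: "\<And>q. q \<in> W \<Longrightarrow> q \<noteq> u \<Longrightarrow> matched M q" using na by blast
  have un: "\<And>p q. p \<in> W \<Longrightarrow> q \<in> W \<Longrightarrow> matched M p \<Longrightarrow> matched M q \<Longrightarrow> p = q"
    using uniq_matched W by blast
  show False
  proof (cases "u = a \<or> u = b")
    case True
    then have "c \<noteq> u" "d \<noteq> u" using s(1) by auto
    then show False using m un s(1,3) by (metis distinct_length_2_or_more insertCI)
  next
    case False
    then show False using m un s(1,3) by (metis distinct_length_2_or_more insertCI)
  qed
qed

lemma kept_notpe: "e \<in> sqE W \<Longrightarrow> g \<in> A0 \<Longrightarrow> e \<notin> set (pe g)"
  using sqE_sub pathf(4) by fastforce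

lemma cyc_path:
  assumes g: "g \<in> A0" "g \<notin> M" and u: "u \<in> ends0 g" and w: "w \<in> ends0 g"
  shows "(u,w) \<in> (adj (F1 t - set (pe g)) ends)\<^sup>*"
proof (cases "u = w")
  case True then show ?thesis by simp
next
  case False
  obtain w' where w': "ends0 g = {u,w'}" "u \<noteq> w'" "u \<in> V0" "w' \<in> V0" "sqW u \<noteq> sqW w'"
    "one0 u = g" "one0 w' = g" "cends g = {sqW u, sqW w'}" using A0_other[OF g(1) u] by metis
  have ww: "w = w'" using w w'(1) False by auto
  define W where "W = sqW u"
  have W: "W \<in> CV" "u \<in> W" using sqW w'(3) W_def by auto
  obtain b' where b': "b' \<in> W" "b' \<noteq> u" "\<not> matched M b'" using sq_other_unmatched[OF W] by blast
  have b'V: "b' \<in> V0" using subsetD[OF CV_sub[OF W(1)] b'(1)] .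
  define g' where "g' = one0 b'"
  have g': "g' \<in> A0" "g' \<notin> M" "b' \<in> ends0 g'"
    using one0(1,2)[OF b'V] b'(3) b'V unfolding g'_def matched_def by simp_all
  obtain b'' where b'': "ends0 g' = {b',b''}" "b' \<noteq> b''" "b'' \<in> V0" "sqW b' \<noteq> sqW b''"
    "one0 b'' = g'" using A0_other[OF g'(1) g'(3)] by metis
  have sb': "sqW b' = W" using sqW_eq W(1) b'(1) by simp
  have gg': "g' \<noteq> g"
  proof
    assume "g' = g"
    then have "b' = w'" using g'(3) w'(1) b'(2) by auto
    then show False using sb' w'(5) W_def by simp
  qed
  let ?F = "F1 t - set (pe g)"
  have Wcg: "W \<in> cends g" using w'(8) W_def by simp
  have 1: "(u,b') \<in> (adj ?F ends)\<^sup>*"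
  proof (rule sq_conn[OF W(1) W(2) _ b'(1)])
    show "\<not> pend M t u" using A0M_unm[OF g u] unm_not_pend by blast
    show "\<not> pend M t b'" using b'(3) unm_not_pend by blast
    show "{e \<in> sqE W. keep M t e} \<subseteq> ?F" using kept_F1 kept_notpe[OF _ g(1)] by blast
  qed
  have 2: "(b',b'') \<in> (adj ?F ends)\<^sup>*"
  proof (rule pe_conn[OF g'(1)])
    show "set (pe g') \<subseteq> ?F" using pe_F1[OF g'(1)] pe_disj[OF g'(1) g(1) gg'] by blast
    show "b' \<in> ends0 g'" "b'' \<in> ends0 g'" using b''(1) by auto
  qed
  have sb'': "sqW b'' \<in> CV - {W}" "b'' \<in> sqW b''" using sqW[OF b''(3)] b''(4) sb' by auto
  have sw: "sqW w \<in> CV - {W}" "w \<in> sqW w" using sqW[OF w'(4)] w'(5) ww W_def by auto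
  have "\<forall>p\<in>sqW b''. \<forall>q\<in>sqW w. \<not> pend M t p \<longrightarrow> \<not> pend M t q \<longrightarrow> (p,q) \<in> (adj ?F ends)\<^sup>*"
  proof (rule lift[OF _ _ _ _ conn_del[OF W(1) sb''(1) sw(1)] sb''(1)])
    show "\<forall>h\<in>{h \<in> A0 - M. W \<notin> cends h}. h \<in> A0 \<and> h \<notin> M \<and> cends h \<subseteq> CV - {W}"
      using cends_sub by auto
    show "CV - {W} \<subseteq> CV" by auto
    show "\<forall>h\<in>{h \<in> A0 - M. W \<notin> cends h}. set (pe h) \<subseteq> ?F"
    proof
      fix h assume h: "h \<in> {h \<in> A0 - M. W \<notin> cends h}"
      then have "h \<noteq> g" using Wcg by auto
      then show "set (pe h) \<subseteq> ?F" using pe_F1 pe_disj g(1) h by blast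
    qed
    show "\<forall>W'\<in>CV - {W}. {e \<in> sqE W'. keep M t e} \<subseteq> ?F" using kept_F1 kept_notpe[OF _ g(1)] by blast
  qed
  moreover have "\<not> pend M t b''" using unm_not_pend A0M_unm[OF g'(1,2)] b''(1) by auto
  moreover have "\<not> pend M t w" using unm_not_pend A0M_unm[OF g w] by auto
  ultimately have 3: "(b'',w) \<in> (adj ?F ends)\<^sup>*" using sb''(2) sw(2) by blast
  show ?thesis using rtrancl_trans[OF rtrancl_trans[OF 1 2] 3] .
qed

end

context L2 begin

lemma cyc_pe:
  assumes e: "e \<in> E" "x e = 1" "owner e \<notin> M" and ab: "ends e = {a,b}"
  shows "(a,b) \<in> (adj (F1 t - {e}) ends)\<^sup>*"
proof -
  define g where "g = owner e"
  have g: "g \<in> A0" "e \<in> set (pe g)" "g \<notin> M" using owner[OF e(1,2)] e(3) g_def by auto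
  obtain j where j: "j < length (pe g)" "e = pe g ! j" using g(2) unfolding in_set_conv_nth by blast
  have p: "is_path ends (pv g) (pe g)" using pathf(1)[OF g(1)] .
  have ej: "ends e = {pv g ! j, pv g ! Suc j}" using p j unfolding is_path_def by auto
  have sub1: "set (pe g) - {e} \<subseteq> F1 t - {e}" using pe_F1[OF g(1)] by blast
  have sub2: "F1 t - set (pe g) \<subseteq> F1 t - {e}" using g(2) by blast
  have 1: "(pv g ! j, hd (pv g)) \<in> (adj (F1 t - {e}) ends)\<^sup>*"
    using adj_rtrancl_mono[OF path_minus(1)[OF p j(1), folded j(2)] sub1] .
  have 3: "(pv g ! Suc j, last (pv g)) \<in> (adj (F1 t - {e}) ends)\<^sup>*"
    using adj_rtrancl_mono[OF path_minus(2)[OF p j(1), folded j(2)] sub1] .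
  have hl: "hd (pv g) \<in> ends0 g" "last (pv g) \<in> ends0 g" using pathf(2)[OF g(1)] by auto
  have 2: "(hd (pv g), last (pv g)) \<in> (adj (F1 t - {e}) ends)\<^sup>*"
    using adj_rtrancl_mono[OF cyc_path[OF g(1) g(3) hl] sub2] .
  have "(pv g ! j, pv g ! Suc j) \<in> (adj (F1 t - {e}) ends)\<^sup>*"
    using rtrancl_trans[OF rtrancl_trans[OF 1 2] adj_rtrancl_sym[OF 3]] .
  then show ?thesis using pair_conn ab ej by metis
qed

lemma cyc_kept:
  assumes W: "W \<in> CV" and e: "e \<in> sqE W" "keep M t e" and ab: "ends e = {a,b}"
  shows "(a,b) \<in> (adj (F1 t - {e}) ends)\<^sup>*"
proof -
  obtain vs es where ve: "is_path ends vs es" "set es = {e\<in>sqE W. keep M t e}"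
           "set vs = W - {p. pend M t p}" "\<not> matched M (hd vs)" "\<not> matched M (last vs)"
    using sq_path[OF W] by blast
  have "e \<in> set es" using e ve(2) by blast
  then obtain j where j: "j < length es" "e = es ! j" unfolding in_set_conv_nth by blast
  have ej: "ends e = {vs ! j, vs ! Suc j}" using ve(1) j unfolding is_path_def by auto
  have sub1: "set es - {e} \<subseteq> F1 t - {e}" using ve(2) kept_F1 by blast
  have 1: "(vs ! j, hd vs) \<in> (adj (F1 t - {e}) ends)\<^sup>*"
    using adj_rtrancl_mono[OF path_minus(1)[OF ve(1) j(1), folded j(2)] sub1] .
  have 5: "(vs ! Suc j, last vs) \<in> (adj (F1 t - {e}) ends)\<^sup>*"
    using adj_rtrancl_mono[OF path_minus(2)[OF ve(1) j(1), folded j(2)] sub1] .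
  have vne: "vs \<noteq> []" using ve(1) unfolding is_path_def by auto
  have p1W: "hd vs \<in> W" and p2W: "last vs \<in> W" using ve(3) vne by (metis Diff_iff hd_in_set, metis Diff_iff last_in_set)
  have p1V: "hd vs \<in> V0" and p2V: "last vs \<in> V0" using CV_sub[OF W] p1W p2W by auto
  define g1 where "g1 = one0 (hd vs)"
  define g2 where "g2 = one0 (last vs)"
  have g1: "g1 \<in> A0" "g1 \<notin> M" "hd vs \<in> ends0 g1" using one0(1,2)[OF p1V] ve(4) p1V unfolding g1_def matched_def by simp_all
  have g2: "g2 \<in> A0" "g2 \<notin> M" "last vs \<in> ends0 g2" using one0(1,2)[OF p2V] ve(5) p2V unfolding g2_def matched_def by simp_all
  obtain q1 where q1: "ends0 g1 = {hd vs, q1}" "q1 \<in> V0" "sqW (hd vs) \<noteq> sqW q1"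
    using A0_other[OF g1(1) g1(3)] by metis
  obtain q2 where q2: "ends0 g2 = {last vs, q2}" "q2 \<in> V0" "sqW (last vs) \<noteq> sqW q2"
    using A0_other[OF g2(1) g2(3)] by metis
  have s1: "sqW (hd vs) = W" "sqW (last vs) = W" using sqW_eq[OF W] p1W p2W by auto
  let ?F = "F1 t - {e}"
  have pF: "\<And>h. h \<in> A0 \<Longrightarrow> set (pe h) \<subseteq> ?F" using pe_F1 kept_notpe[OF e(1)] by blast
  have 2: "(hd vs, q1) \<in> (adj ?F ends)\<^sup>*" using pe_conn[OF g1(1) pF[OF g1(1)]] q1(1) by auto
  have 4: "(q2, last vs) \<in> (adj ?F ends)\<^sup>*" using pe_conn[OF g2(1) pF[OF g2(1)]] q2(1) by auto
  have sq1: "sqW q1 \<in> CV - {W}" "q1 \<in> sqW q1" using sqW[OF q1(2)] q1(3) s1 by auto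
  have sq2: "sqW q2 \<in> CV - {W}" "q2 \<in> sqW q2" using sqW[OF q2(2)] q2(3) s1 by auto
  have "\<forall>p\<in>sqW q1. \<forall>q\<in>sqW q2. \<not> pend M t p \<longrightarrow> \<not> pend M t q \<longrightarrow> (p,q) \<in> (adj ?F ends)\<^sup>*"
  proof (rule lift[OF _ _ _ _ conn_del[OF W sq1(1) sq2(1)] sq1(1)])
    show "\<forall>h\<in>{h \<in> A0 - M. W \<notin> cends h}. h \<in> A0 \<and> h \<notin> M \<and> cends h \<subseteq> CV - {W}"
      using cends_sub by auto
    show "CV - {W} \<subseteq> CV" by auto
    show "\<forall>h\<in>{h \<in> A0 - M. W \<notin> cends h}. set (pe h) \<subseteq> ?F" using pF by auto
    show "\<forall>W'\<in>CV - {W}. {e \<in> sqE W'. keep M t e} \<subseteq> ?F"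
    proof
      fix W' assume W': "W' \<in> CV - {W}"
      have "e \<notin> sqE W'" using sqE_unique[OF W _ e(1)] W' by blast
      then show "{e \<in> sqE W'. keep M t e} \<subseteq> ?F" using kept_F1 by blast
    qed
  qed
  moreover have "\<not> pend M t q1" using unm_not_pend A0M_unm[OF g1(1,2)] q1(1) by auto
  moreover have "\<not> pend M t q2" using unm_not_pend A0M_unm[OF g2(1,2)] q2(1) by auto
  ultimately have 3: "(q1,q2) \<in> (adj ?F ends)\<^sup>*" using sq1(2) sq2(2) by blast
  have "(vs ! j, vs ! Suc j) \<in> (adj ?F ends)\<^sup>*"
    using rtrancl_trans[OF rtrancl_trans[OF rtrancl_trans[OF rtrancl_trans[OF 1 2] 3] 4] adj_rtrancl_sym[OF 5]] .
  then show ?thesis using pair_conn ab ej by metis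
qed

lemma two_ec: "two_ec_multigraph V E ends (mult M t)"
proof (rule two_ec_crit[OF wfV])
  show "\<forall>e. e \<notin> E \<longrightarrow> mult M t e = 0" unfolding mult_def by auto
  show "\<forall>u\<in>V. \<forall>w\<in>V. (u, w) \<in> (adj (F1 t) ends)\<^sup>*" using conn_F1 by blast
  show "\<forall>e\<in>E. mult M t e = 1 \<longrightarrow> (\<forall>a b. ends e = {a, b} \<longrightarrow> (a, b) \<in> (adj (F1 t - {e}) ends)\<^sup>*)"
  proof (intro ballI impI allI)
    fix e a b assume e: "e \<in> E" "mult M t e = 1" and ab: "ends e = {a,b}"
    show "(a, b) \<in> (adj (F1 t - {e}) ends)\<^sup>*"
    proof (cases "x e = 1")
      case True
      then show ?thesis using mult1[OF e] cyc_pe[OF e(1) True _ ab] by auto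
    next
      case False
      then have h: "x e = 1/2" "keep M t e" using mult1[OF e] by auto
      then show ?thesis using half_sq[OF e(1) h(1)] cyc_kept[OF _ _ h(2) ab] by blast
    qed
  qed
qed

end

context L2 begin

lemma mult_half: "e \<in> E \<Longrightarrow> x e = 1/2 \<Longrightarrow> mult M t e = (if keep M t e then 1 else 0)"
  unfolding mult_def by auto

lemma mult_one: "e \<in> E \<Longrightarrow> x e = 1 \<Longrightarrow> mult M t e = (if owner e \<in> M then 2 else 1)"
  unfolding mult_def by auto

lemma val_H:
  assumes e: "e \<in> E" "x e = 1/2" "e \<in> H"
  shows "mult M True e + mult M False e = 1"
proof -
  define W where "W = sqOf e"
  have W: "W \<in> CV" "e \<in> sqE W" using half_sq[OF e(1,2)] W_def by auto
  have kp: "\<And>t. keep M t e = keepW M t W e" unfolding keep_def W_def by simp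
  show ?thesis
  proof (cases "\<exists>p\<in>W. matched M p")
    case True
    then obtain p where p: "p \<in> W" "matched M p" by blast
    have k: "\<And>t. keep M t e \<longleftrightarrow> (pend M t p \<longrightarrow> p \<notin> ends0 e) \<and> (\<not> pend M t p \<longrightarrow> p \<in> ends0 e)"
      unfolding kp keepW_matched[OF W(1) p] using e(3) by simp
    have "pend M True p \<longleftrightarrow> \<not> pend M False p" using pend_not[OF p(2), of True] by simp
    then show ?thesis unfolding mult_half[OF e(1,2)] k by auto
  next
    case False
    then have k: "\<And>t. keep M t e \<longleftrightarrow> e \<noteq> betaE t W" unfolding kp using keepW_unmatched by blast
    have "e \<in> sqE W \<inter> H" using W e by blast
    then have "e = betaE True W \<or> e = betaE False W" using betaE(4)[OF W(1)] by blast
    then show ?thesis unfolding mult_half[OF e(1,2)] k using betaE(3)[OF W(1)] by auto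
  qed
qed

lemma val_C:
  assumes e: "e \<in> E" "x e = 1/2" "e \<notin> H" and uv: "ends0 e = {u,v}" "u \<noteq> v"
  shows "mult M True e + mult M False e + (if matched M u then 1 else 0) + (if matched M v then 1 else 0) = 2"
proof -
  define W where "W = sqOf e"
  have W: "W \<in> CV" "e \<in> sqE W" using half_sq[OF e(1,2)] W_def by auto
  have uvW: "u \<in> W" "v \<in> W" using W(2) uv unfolding sqE_def by auto
  have kp: "\<And>t. keep M t e = keepW M t W e" unfolding keep_def W_def by simp
  show ?thesis
  proof (cases "\<exists>p\<in>W. matched M p")
    case True
    then obtain p where p: "p \<in> W" "matched M p" by blast
    have k: "\<And>t. keep M t e \<longleftrightarrow> (pend M t p \<longrightarrow> p \<notin> ends0 e)"
      unfolding kp keepW_matched[OF W(1) p] using e(3) by simp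
    have pn: "pend M True p \<longleftrightarrow> \<not> pend M False p" using pend_not[OF p(2), of True] by simp
    have mu: "matched M u \<longleftrightarrow> u = p" using uniq_matched[OF W(1) p] uvW p(2) by blast
    have mv: "matched M v \<longleftrightarrow> v = p" using uniq_matched[OF W(1) p] uvW p(2) by blast
    show ?thesis unfolding mult_half[OF e(1,2)] k mu mv uv using pn uv(2) by auto
  next
    case False
    then have k: "\<And>t. keep M t e \<longleftrightarrow> e \<noteq> betaE t W" unfolding kp using keepW_unmatched by blast
    have "betaE True W \<in> H" "betaE False W \<in> H" using betaE(1,2)[OF W(1)] by auto
    then have "keep M True e" "keep M False e" unfolding k using e(3) by auto
    moreover have "\<not> matched M u" "\<not> matched M v" using False uvW by auto
    ultimately show ?thesis unfolding mult_half[OF e(1,2)] by simp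
  qed
qed

end

context L1 begin

lemma L2_results:
  assumes "M \<subseteq> A0" "matching A0 cends M" "two_vertex_connected CV (A0 - M) cends"
  shows "two_ec_multigraph V E ends (mult M t)"
    and "\<And>e. e \<in> E \<Longrightarrow> x e = 1 \<Longrightarrow> mult M t e = (if owner e \<in> M then 2 else 1)"
    and "\<And>e. e \<in> E \<Longrightarrow> x e = 1/2 \<Longrightarrow> e \<in> H \<Longrightarrow> mult M True e + mult M False e = 1"
    and "\<And>e u v. e \<in> E \<Longrightarrow> x e = 1/2 \<Longrightarrow> e \<notin> H \<Longrightarrow> ends0 e = {u,v} \<Longrightarrow> u \<noteq> v \<Longrightarrow>
       mult M True e + mult M False e + (if matched M u then 1 else 0) + (if matched M v then 1 else 0) = 2"
proof -
  interpret L2 V0 E0 ends0 x0 V E ends x H pv pe M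
    by (rule L2.intro[OF L1_axioms]) (unfold_locales; rule assms)
  show "two_ec_multigraph V E ends (mult M t)" by (rule two_ec)
  show "\<And>e. e \<in> E \<Longrightarrow> x e = 1 \<Longrightarrow> mult M t e = (if owner e \<in> M then 2 else 1)" by (rule mult_one)
  show "\<And>e. e \<in> E \<Longrightarrow> x e = 1/2 \<Longrightarrow> e \<in> H \<Longrightarrow> mult M True e + mult M False e = 1" by (rule val_H)
  show "\<And>e u v. e \<in> E \<Longrightarrow> x e = 1/2 \<Longrightarrow> e \<notin> H \<Longrightarrow> ends0 e = {u,v} \<Longrightarrow> u \<noteq> v \<Longrightarrow>
       mult M True e + mult M False e + (if matched M u then 1 else 0) + (if matched M v then 1 else 0) = 2"
    by (rule val_C)
qed

end


lemma sum_pairs: "(\<Sum>j<2*k. f j) = (\<Sum>i<k. f (2*i) + f (2*i+1))" for f :: "nat \<Rightarrow> real"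
  by (induction k) (simp_all add: add.assoc)

theorem lemma12:
  fixes V0 V :: "'v set" and E0 E :: "'e set"
    and ends0 ends :: "'e \<Rightarrow> 'v set" and x0 x :: "'e \<Rightarrow> real"
    and H :: "'e set" and \<alpha> :: real
  assumes bc: "boyd_carr_point V0 E0 ends0 x0"
    and sub: "subdivision V0 E0 ends0 x0 V E ends x"
    and ham: "hamiltonian_cycle V E ends H"
    and ones_in_H: "{e\<in>E. x e = 1} \<subseteq> H"
    and opp: "\<forall>C\<in>half_squares E ends x. \<exists>e1 e2. e1 \<noteq> e2 \<and> C \<inter> H = {e1, e2} \<and>
                 ends e1 \<inter> ends e2 = {}"
    and alpha: "\<alpha> > 0"
    and P: "P_prop (contr_V E0 ends0 x0) (contr_E E0 x0) (contr_ends E0 ends0 x0) \<alpha>"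
  shows "convex_comb_2ec V E ends (r_vec \<alpha> x H)"
proof -
  obtain k :: nat and lam :: "nat \<Rightarrow> real" and Ms :: "nat \<Rightarrow> 'e set" where Pk: "\<forall>i<k. lam i \<ge> 0 \<and> matching (contr_E E0 x0) (contr_ends E0 ends0 x0) (Ms i) \<and>
        two_vertex_connected (contr_V E0 ends0 x0) (contr_E E0 x0 - Ms i) (contr_ends E0 ends0 x0)"
      "(\<Sum>i<k. lam i) = 1"
      "\<forall>e\<in>contr_E E0 x0. (\<Sum>i<k. lam i * (if e \<in> Ms i then 1 else 0)) = \<alpha>"
    using P unfolding P_prop_def by blast
  have noloop: "\<forall>g\<in>contr_E E0 x0. card (contr_ends E0 ends0 x0 g) = 2"
  proof
    fix g assume g: "g \<in> contr_E E0 x0"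
    have "\<exists>i<k. g \<in> Ms i"
    proof (rule ccontr)
      assume "\<not> (\<exists>i<k. g \<in> Ms i)"
      then have "(\<Sum>i<k. lam i * (if g \<in> Ms i then 1 else 0)) = 0" by simp
      then show False using Pk(3) g alpha by auto
    qed
    then obtain i where "i < k" "g \<in> Ms i" by blast
    then show "card (contr_ends E0 ends0 x0 g) = 2" using Pk(1) unfolding matching_def by blast
  qed
  obtain pv pe where pvpe: "\<forall>f\<in>E0. x0 f = 1 \<longrightarrow>
            is_path ends (pv f) (pe f) \<and> {hd (pv f), last (pv f)} = ends0 f \<and>
            set (pe f) \<subseteq> E \<and> (\<forall>e\<in>set (pe f). x e = 1) \<and>
            inner (pv f) \<inter> V0 = {}"
     "\<forall>f\<in>E0. \<forall>g\<in>E0. x0 f = 1 \<and> x0 g = 1 \<and> f \<noteq> g \<longrightarrow>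
            set (pe f) \<inter> set (pe g) = {} \<and> inner (pv f) \<inter> inner (pv g) = {}"
     "{e\<in>E. x e = 1} = (\<Union>f\<in>{f\<in>E0. x0 f = 1}. set (pe f))"
     "V = V0 \<union> (\<Union>f\<in>{f\<in>E0. x0 f = 1}. inner (pv f))"
  proof -
    have "\<exists>pv pe. (\<forall>f\<in>E0. x0 f = 1 \<longrightarrow>
            is_path ends (pv f) (pe f) \<and> {hd (pv f), last (pv f)} = ends0 f \<and>
            set (pe f) \<subseteq> E \<and> (\<forall>e\<in>set (pe f). x e = 1) \<and>
            inner (pv f) \<inter> V0 = {}) \<and>
        (\<forall>f\<in>E0. \<forall>g\<in>E0. x0 f = 1 \<and> x0 g = 1 \<and> f \<noteq> g \<longrightarrow>
            set (pe f) \<inter> set (pe g) = {} \<and> inner (pv f) \<inter> inner (pv g) = {}) \<and>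
        {e\<in>E. x e = 1} = (\<Union>f\<in>{f\<in>E0. x0 f = 1}. set (pe f)) \<and>
        V = V0 \<union> (\<Union>f\<in>{f\<in>E0. x0 f = 1}. inner (pv f))"
      using sub unfolding subdivision_def by (elim conjE)
    then show ?thesis using that by (elim exE conjE) (rule that; assumption)
  qed
  have subf1: "wf_graph V E ends" using sub unfolding subdivision_def by (elim conjE) assumption
  have subf2: "\<forall>e\<in>E. x e = 1/2 \<or> x e = 1" using sub unfolding subdivision_def by (elim conjE) assumption
  have subf3: "V0 \<subseteq> V" using sub unfolding subdivision_def by (elim conjE) assumption
  have subf4: "{e\<in>E. x e = 1/2} = {e\<in>E0. x0 e = 1/2}" using sub unfolding subdivision_def by (elim conjE) assumption
  have subf5: "\<forall>e\<in>E0. x0 e = 1/2 \<longrightarrow> ends e = ends0 e" using sub unfolding subdivision_def by (elim conjE) assumption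
  note subf = subf1 subf2 subf3 subf4 subf5
  interpret L1 V0 E0 ends0 x0 V E ends x H pv pe
    by (unfold_locales; (rule bc subf pvpe opp noloop)?)
  have Msub: "\<And>i. i < k \<Longrightarrow> Ms i \<subseteq> contr_E E0 x0" using Pk(1) unfolding matching_def by blast
  have Mm: "\<And>i. i < k \<Longrightarrow> matching (contr_E E0 x0) (contr_ends E0 ends0 x0) (Ms i)" using Pk(1) by blast
  have M2: "\<And>i. i < k \<Longrightarrow> two_vertex_connected (contr_V E0 ends0 x0) (contr_E E0 x0 - Ms i) (contr_ends E0 ends0 x0)"
    using Pk(1) by blast
  have R1: "\<And>i t. i < k \<Longrightarrow> two_ec_multigraph V E ends (mult (Ms i) t)"
    using L2_results(1)[OF Msub Mm M2] by blast
  have R2: "\<And>i t e. i < k \<Longrightarrow> e \<in> E \<Longrightarrow> x e = 1 \<Longrightarrow> mult (Ms i) t e = (if owner e \<in> Ms i then 2 else 1)"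
    using L2_results(2)[OF Msub Mm M2] by blast
  have R3: "\<And>i e. i < k \<Longrightarrow> e \<in> E \<Longrightarrow> x e = 1/2 \<Longrightarrow> e \<in> H \<Longrightarrow> mult (Ms i) True e + mult (Ms i) False e = 1"
    using L2_results(3)[OF Msub Mm M2] by blast
  have R4: "\<And>i e u v. i < k \<Longrightarrow> e \<in> E \<Longrightarrow> x e = 1/2 \<Longrightarrow> e \<notin> H \<Longrightarrow> ends0 e = {u,v} \<Longrightarrow> u \<noteq> v \<Longrightarrow>
       mult (Ms i) True e + mult (Ms i) False e + (if matched (Ms i) u then 1 else 0) + (if matched (Ms i) v then 1 else 0) = 2"
    using L2_results(4)[OF Msub Mm M2] by blast
  define lam' where "lam' = (\<lambda>j. lam (j div 2) / 2)"
  define m' where "m' = (\<lambda>j. mult (Ms (j div 2)) (even j))"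
  have c1: "\<forall>j<2*k. lam' j \<ge> 0 \<and> two_ec_multigraph V E ends (m' j)"
  proof (intro allI impI conjI)
    fix j assume j: "j < 2*k"
    then have jk: "j div 2 < k" by auto
    show "lam' j \<ge> 0" unfolding lam'_def using Pk(1) jk by auto
    show "two_ec_multigraph V E ends (m' j)" unfolding m'_def using R1[OF jk] .
  qed
  have c2: "(\<Sum>j<2*k. lam' j) = 1"
    unfolding sum_pairs lam'_def using Pk(2) by simp
  have c3: "\<forall>e\<in>E. (\<Sum>j<2*k. lam' j * real (m' j e)) = r_vec \<alpha> x H e"
  proof
    fix e assume eE: "e \<in> E"
    have S: "(\<Sum>j<2*k. lam' j * real (m' j e)) =
       (\<Sum>i<k. lam i * ((real (mult (Ms i) True e) + real (mult (Ms i) False e)) / 2))"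
      unfolding sum_pairs lam'_def m'_def by (intro sum.cong) (simp_all add: field_simps)
    show "(\<Sum>j<2*k. lam' j * real (m' j e)) = r_vec \<alpha> x H e"
    proof (cases "x e = 1")
      case True
      have oA: "owner e \<in> contr_E E0 x0" using owner[OF eE True] by simp
      have "(\<Sum>i<k. lam i * ((real (mult (Ms i) True e) + real (mult (Ms i) False e)) / 2)) =
            (\<Sum>i<k. lam i + lam i * (if owner e \<in> Ms i then 1 else 0))"
        by (rule sum.cong) (auto simp: R2[OF _ eE True])
      also have "\<dots> = 1 + \<alpha>" using Pk(2) Pk(3) oA by (simp add: sum.distrib)
      finally show ?thesis using S True unfolding r_vec_def by simp
    next
      case False
      then have xh: "x e = 1/2" using subf2 eE by auto
      show ?thesis
      proof (cases "e \<in> H")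
        case True
        have "(\<Sum>i<k. lam i * ((real (mult (Ms i) True e) + real (mult (Ms i) False e)) / 2)) =
            (\<Sum>i<k. lam i / 2)"
        proof (rule sum.cong)
          fix i assume "i \<in> {..<k}"
          then have "mult (Ms i) True e + mult (Ms i) False e = 1" using R3[OF _ eE xh True] by simp
          then have "real (mult (Ms i) True e) + real (mult (Ms i) False e) = 1" by (metis of_nat_1 of_nat_add)
          then show "lam i * ((real (mult (Ms i) True e) + real (mult (Ms i) False e)) / 2) = lam i / 2" by simp
        qed simp
        also have "\<dots> = 1/2" using Pk(2) by (simp add: sum_divide_distrib[symmetric])
        finally show ?thesis using S True False unfolding r_vec_def by simp
      next
        case nH: False
        have e0: "e \<in> E0" "x0 e = 1/2" using half_facts[OF eE xh] by auto
        have "card (ends0 e) = 2" "ends0 e \<subseteq> V0" using wf0 e0 unfolding wf_graph_def by auto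
        then obtain u v where uv: "ends0 e = {u,v}" "u \<noteq> v" "u \<in> V0" "v \<in> V0"
          unfolding card_2_iff by auto
        have oA: "one0 u \<in> contr_E E0 x0" "one0 v \<in> contr_E E0 x0" using one0(1) uv by auto
        have "(\<Sum>i<k. lam i * ((real (mult (Ms i) True e) + real (mult (Ms i) False e)) / 2)) =
            (\<Sum>i<k. lam i - (lam i * (if one0 u \<in> Ms i then 1 else 0)) / 2 - (lam i * (if one0 v \<in> Ms i then 1 else 0)) / 2)"
        proof (rule sum.cong)
          fix i assume "i \<in> {..<k}"
          then have "mult (Ms i) True e + mult (Ms i) False e + (if matched (Ms i) u then 1 else 0) + (if matched (Ms i) v then 1 else 0) = 2"
            using R4[OF _ eE xh nH uv(1,2)] by simp
          moreover have "matched (Ms i) u \<longleftrightarrow> one0 u \<in> Ms i" "matched (Ms i) v \<longleftrightarrow> one0 v \<in> Ms i"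
            using uv unfolding matched_def by auto
          ultimately have "real (mult (Ms i) True e) + real (mult (Ms i) False e) =
              2 - (if one0 u \<in> Ms i then 1 else 0) - (if one0 v \<in> Ms i then 1 else 0)"
            by (auto split: if_splits)
          moreover define iu :: real where "iu = (if one0 u \<in> Ms i then 1 else 0)"
          moreover define iv :: real where "iv = (if one0 v \<in> Ms i then 1 else 0)"
          ultimately have eq: "real (mult (Ms i) True e) + real (mult (Ms i) False e) = 2 - iu - iv" by simp
          have "lam i * ((real (mult (Ms i) True e) + real (mult (Ms i) False e)) / 2) =
            lam i - (lam i * iu) / 2 - (lam i * iv) / 2" unfolding eq by (simp add: field_simps)
          then show "lam i * ((real (mult (Ms i) True e) + real (mult (Ms i) False e)) / 2) =
            lam i - (lam i * (if one0 u \<in> Ms i then 1 else 0)) / 2 - (lam i * (if one0 v \<in> Ms i then 1 else 0)) / 2"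
            unfolding iu_def iv_def .
        qed simp
        also have "\<dots> = 1 - \<alpha>/2 - \<alpha>/2"
          using Pk(2) Pk(3) oA by (simp add: sum_subtractf sum_divide_distrib[symmetric])
        finally show ?thesis using S nH False unfolding r_vec_def by simp
      qed
    qed
  qed
  show ?thesis unfolding convex_comb_2ec_def
    by (rule exI[where x="2*k"], rule exI[where x=lam'], rule exI[where x=m']) (use c1 c2 c3 in blast)
qed


end
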